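(* Let $R$ be a commutative ring with unit, let $\mathcal{P}$ be a filtered poset, and let $F\colon\mathcal{P}\to R\text{-mod}$ be a functor, regarded as a functor $\mathcal{P}\to\operatorname{Ch}(R)$ concentrated in degree $0$. Then $F$ is cofibrant in the model structure on $\operatorname{Fun}(\mathcal{P},\operatorname{Ch}(R))$ described below if and only if $F$ is pseudo-projective. Moreover, in this case $F$ is $\operatorname{colim}$-acyclic, i.e. $\operatorname{colim}_nF=0$ for all $n>0$, where $\operatorname{colim}_n$ denotes the $n$-th left derived functor of $\operatorname{colim}_{\mathcal{P}}\colon\operatorname{Fun}(\mathcal{P},R\text{-mod})\to R\text{-mod}$.
   Context: A filtered poset is a poset $\mathcal{P}$ equipped with a map $d\colon\mathcal{P}\to\mathbb{N}$ such that $d(i)<d(j)$ whenever $i<j$. $\operatorname{Ch}(R)$ is the category of unbounded chain complexes of $R$-modules with the injective model structure (weak equivalences the quasi-isomorphisms, cofibrations the monomorphisms). $\operatorname{Fun}(\mathcal{P},\operatorname{Ch}(R))$ carries the Reedy model structure obtained by regarding $\mathcal{P}$ as a Reedy category with direct part $\mathcal{P}$ and inverse part the discrete category on the objects of $\mathcal{P}$: weak equivalences and fibrations are objectwise; a natural transformation $\eta\colon F\Rightarrow G$ is a cofibration iff for each $i$ the latching map $F(i)\sqcup_{\operatorname{colim}_{\mathcal{P}_{<i}}F}\operatorname{colim}_{\mathcal{P}_{<i}}G\to G(i)$ is a cofibration. Notation: $\mathcal{P}_{<i}=\{j:j<i\}$, $\mathcal{P}_{\le i}=\{j:j\le i\}$;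 $F(j<i)$ is the image under $F$ of the arrow $j\to i$, with $F(i<i)=1_{F(i)}$; $\operatorname{Im}_F(j)=\sum_{k<j}\operatorname{Im}F(k<j)$; $\max J$ is the set of maximal elements of $J$. $F$ is pseudo-projective at $i$ if for every finite $J\subset\mathcal{P}_{\le i}$ and every $\oplus_{j\in J}x_j\in\bigoplus_{j\in J}F(j)$ with $\sum_{j\in J}F(j<i)(x_j)=0$, one has $x_j\in\operatorname{Im}_F(j)$ for all $j\in\max J$; $F$ is pseudo-projective if it is so at every $i$. *)

theory Defs
  imports Main "HOL.Modules"
begin

text \<open>
R-modules are realised as submodules (module.subspace) of an ambient R-module
given by a scalar multiplication s :: 'r => 'm => 'm on an abelian group 'm
(locale module from HOL.Modules).  A functor F : P -> R-mod on a poset P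
(the type 'p :: order) is a family of submodules S i together with maps
f i j : S i -> S j for i <= j (the image of the arrow i -> j) that are
R-linear, identities for i = i and compatible with composition.
\<close>

definition lin_on :: "('r::comm_ring_1 \<Rightarrow> 'a::ab_group_add \<Rightarrow> 'a) \<Rightarrow> ('r \<Rightarrow> 'b::ab_group_add \<Rightarrow> 'b)
    \<Rightarrow> 'a set \<Rightarrow> ('a \<Rightarrow> 'b) \<Rightarrow> bool" where
  "lin_on s1 s2 A g \<longleftrightarrow>
     (\<forall>x\<in>A. \<forall>y\<in>A. g (x + y) = g x + g y) \<and> (\<forall>c. \<forall>x\<in>A. g (s1 c x) = s2 c (g x))"

definition pmod :: "('r::comm_ring_1 \<Rightarrow> 'm::ab_group_add \<Rightarrow> 'm) \<Rightarrow> ('p::order \<Rightarrow> 'm set)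
    \<Rightarrow> ('p \<Rightarrow> 'p \<Rightarrow> 'm \<Rightarrow> 'm) \<Rightarrow> bool" where
  "pmod s S f \<longleftrightarrow> module s \<and> (\<forall>i. module.subspace s (S i)) \<and>
     (\<forall>i j. i \<le> j \<longrightarrow> lin_on s s (S i) (f i j) \<and> f i j ` S i \<subseteq> S j) \<and>
     (\<forall>i. \<forall>x\<in>S i. f i i x = x) \<and>
     (\<forall>i j k. i \<le> j \<longrightarrow> j \<le> k \<longrightarrow> (\<forall>x\<in>S i. f j k (f i j x) = f i k x))"

definition filtration :: "('p::order \<Rightarrow> nat) \<Rightarrow> bool" where
  "filtration d \<longleftrightarrow> (\<forall>i j. i < j \<longrightarrow> d i < d j)"

text \<open>Elements of the direct sum of the S j over j in A: finitely supported families.\<close>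
definition dsum :: "('p \<Rightarrow> 'm::zero set) \<Rightarrow> 'p set \<Rightarrow> ('p \<Rightarrow> 'm) set" where
  "dsum S A = {x. finite {j. x j \<noteq> 0} \<and> (\<forall>j. x j \<in> S j) \<and> (\<forall>j. x j \<noteq> 0 \<longrightarrow> j \<in> A)}"

text \<open>The submodule of relations defining the colimit over the full subposet A:
  colim_A F = (direct sum over A of F(j)) / colim_rel.  It consists of the finite sums of
  the generators  delta_k(a) - delta_j(F(k<j) a)  (k <= j in A, a in F(k));
  since each F(k) is a submodule and F(k<j) is linear, this is the submodule they span.\<close>
inductive_set colim_rel :: "('p::order \<Rightarrow> 'm::ab_group_add set) \<Rightarrow> ('p \<Rightarrow> 'p \<Rightarrow> 'm \<Rightarrow> 'm)
    \<Rightarrow> 'p set \<Rightarrow> ('p \<Rightarrow> 'm) set" for S f A where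
  zero: "(\<lambda>_. 0) \<in> colim_rel S f A"
| step: "x \<in> colim_rel S f A \<Longrightarrow> k \<in> A \<Longrightarrow> j \<in> A \<Longrightarrow> k \<le> j \<Longrightarrow> a \<in> S k \<Longrightarrow>
     (\<lambda>t. x t + (if t = k then a else 0) - (if t = j then f k j a else 0)) \<in> colim_rel S f A"

text \<open>The latching map colim_{P_{<i}} F -> F(i) is injective (a monomorphism): an element of
  the direct sum over P_{<i} mapped to 0 by the canonical cocone map lies in the relations.\<close>
definition latching_mono :: "('p::order \<Rightarrow> 'm::ab_group_add set) \<Rightarrow> ('p \<Rightarrow> 'p \<Rightarrow> 'm \<Rightarrow> 'm) \<Rightarrow> 'p \<Rightarrow> bool" where
  "latching_mono S f i \<longleftrightarrow>
     (\<forall>x\<in>dsum S {j. j < i}. (\<Sum>j\<in>{j. x j \<noteq> 0}. f j i (x j)) = 0 \<longrightarrow> x \<in> colim_rel S f {j. j < i})"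

text \<open>A functor P -> Ch(R) is given degreewise: C i n is the degree-n module of the complex at i,
  g i j n the degree-n component of the map for i <= j.  (Differentials play no role in the
  cofibrancy condition.)  Colimits in Ch(R) are computed degreewise, and cofibrations of Ch(R)
  (injective model structure) are the degreewise injective maps.  An object G is Reedy cofibrant
  iff 0 => G is a cofibration; since 0(i) + colim_{P<i} 0 colim_{P<i} G = colim_{P<i} G, this
  means that every latching map colim_{P<i} G -> G(i) is injective in every degree.\<close>
definition reedy_cofibrant :: "('p::order \<Rightarrow> int \<Rightarrow> 'm::ab_group_add set) \<Rightarrow> ('p \<Rightarrow> 'p \<Rightarrow> int \<Rightarrow> 'm \<Rightarrow> 'm) \<Rightarrow> bool" where
  "reedy_cofibrant C g \<longleftrightarrow> (\<forall>i n. latching_mono (\<lambda>j. C j n) (\<lambda>j k. g j k n) i)"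

definition deg0 :: "('p \<Rightarrow> 'm::zero set) \<Rightarrow> 'p \<Rightarrow> int \<Rightarrow> 'm set" where
  "deg0 S i n = (if n = 0 then S i else {0})"

definition deg0_map :: "('p \<Rightarrow> 'p \<Rightarrow> 'm \<Rightarrow> 'm) \<Rightarrow> 'p \<Rightarrow> 'p \<Rightarrow> int \<Rightarrow> 'm \<Rightarrow> 'm" where
  "deg0_map f i j n = f i j"

definition ImF :: "('p::order \<Rightarrow> 'm::ab_group_add set) \<Rightarrow> ('p \<Rightarrow> 'p \<Rightarrow> 'm \<Rightarrow> 'm) \<Rightarrow> 'p \<Rightarrow> 'm set" where
  "ImF S f j = {y. \<exists>K z. finite K \<and> K \<subseteq> {k. k < j} \<and> (\<forall>k\<in>K. z k \<in> S k) \<and> y = (\<Sum>k\<in>K. f k j (z k))}"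

definition maxs :: "'p::order set \<Rightarrow> 'p set" where
  "maxs J = {j \<in> J. \<not> (\<exists>k\<in>J. j < k)}"

definition pseudo_projective_at :: "('p::order \<Rightarrow> 'm::ab_group_add set) \<Rightarrow> ('p \<Rightarrow> 'p \<Rightarrow> 'm \<Rightarrow> 'm) \<Rightarrow> 'p \<Rightarrow> bool" where
  "pseudo_projective_at S f i \<longleftrightarrow>
     (\<forall>J x. finite J \<longrightarrow> J \<subseteq> {j. j \<le> i} \<longrightarrow> (\<forall>j\<in>J. x j \<in> S j) \<longrightarrow>
        (\<Sum>j\<in>J. f j i (x j)) = 0 \<longrightarrow> (\<forall>j\<in>maxs J. x j \<in> ImF S f j))"

definition pseudo_projective :: "('p::order \<Rightarrow> 'm::ab_group_add set) \<Rightarrow> ('p \<Rightarrow> 'p \<Rightarrow> 'm \<Rightarrow> 'm) \<Rightarrow> bool" where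
  "pseudo_projective S f \<longleftrightarrow> (\<forall>i. pseudo_projective_at S f i)"

text \<open>Free functors P -> R-mod: free on a P-graded set of generators X i \<subseteq> Q i, i.e.
  for every j the elements q i j x (i <= j, x in X i) are pairwise distinct (for distinct
  indices), linearly independent and span Q j.  Free functors are projective in Fun(P, R-mod).\<close>
definition free_pmod :: "('r::comm_ring_1 \<Rightarrow> 'q::ab_group_add \<Rightarrow> 'q) \<Rightarrow> ('p::order \<Rightarrow> 'q set)
    \<Rightarrow> ('p \<Rightarrow> 'p \<Rightarrow> 'q \<Rightarrow> 'q) \<Rightarrow> bool" where
  "free_pmod s Q q \<longleftrightarrow> pmod s Q q \<and> (\<exists>X. (\<forall>i. X i \<subseteq> Q i) \<and> (\<forall>j.
      inj_on (\<lambda>(i, x). q i j x) {(i, x). i \<le> j \<and> x \<in> X i} \<and>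
      \<not> module.dependent s ((\<lambda>(i, x). q i j x) ` {(i, x). i \<le> j \<and> x \<in> X i}) \<and>
      module.span s ((\<lambda>(i, x). q i j x) ` {(i, x). i \<le> j \<and> x \<in> X i}) = Q j))"

definition nat_trans :: "('r::comm_ring_1 \<Rightarrow> 'a::ab_group_add \<Rightarrow> 'a) \<Rightarrow> ('r \<Rightarrow> 'b::ab_group_add \<Rightarrow> 'b)
    \<Rightarrow> ('p::order \<Rightarrow> 'a set) \<Rightarrow> ('p \<Rightarrow> 'p \<Rightarrow> 'a \<Rightarrow> 'a) \<Rightarrow> ('p \<Rightarrow> 'b set) \<Rightarrow> ('p \<Rightarrow> 'p \<Rightarrow> 'b \<Rightarrow> 'b)
    \<Rightarrow> ('p \<Rightarrow> 'a \<Rightarrow> 'b) \<Rightarrow> bool" where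
  "nat_trans s1 s2 A a B b eta \<longleftrightarrow>
     (\<forall>i. lin_on s1 s2 (A i) (eta i) \<and> eta i ` A i \<subseteq> B i) \<and>
     (\<forall>i j. i \<le> j \<longrightarrow> (\<forall>x\<in>A i. eta j (a i j x) = b i j (eta i x)))"

text \<open>A free (hence projective) resolution
  ... -> Q 2 -> Q 1 -> Q 0 -> F -> 0  in Fun(P, R-mod), with dQ k : Q (k+1) => Q k
  and augmentation eps : Q 0 => F, exact at every object of P.\<close>
definition free_resolution :: "('r::comm_ring_1 \<Rightarrow> 'm::ab_group_add \<Rightarrow> 'm) \<Rightarrow> ('r \<Rightarrow> 'q::ab_group_add \<Rightarrow> 'q)
    \<Rightarrow> ('p::order \<Rightarrow> 'm set) \<Rightarrow> ('p \<Rightarrow> 'p \<Rightarrow> 'm \<Rightarrow> 'm)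
    \<Rightarrow> (nat \<Rightarrow> 'p \<Rightarrow> 'q set) \<Rightarrow> (nat \<Rightarrow> 'p \<Rightarrow> 'p \<Rightarrow> 'q \<Rightarrow> 'q) \<Rightarrow> (nat \<Rightarrow> 'p \<Rightarrow> 'q \<Rightarrow> 'q)
    \<Rightarrow> ('p \<Rightarrow> 'q \<Rightarrow> 'm) \<Rightarrow> bool" where
  "free_resolution s s' S f Q q dQ eps \<longleftrightarrow>
     (\<forall>k. free_pmod s' (Q k) (q k)) \<and>
     (\<forall>k. nat_trans s' s' (Q (Suc k)) (q (Suc k)) (Q k) (q k) (dQ k)) \<and>
     nat_trans s' s (Q 0) (q 0) S f eps \<and>
     (\<forall>i. eps i ` Q 0 i = S i) \<and>
     (\<forall>i. {x \<in> Q 0 i. eps i x = 0} = dQ 0 i ` Q 1 i) \<and>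
     (\<forall>k i. {x \<in> Q (Suc k) i. dQ k i x = 0} = dQ (Suc k) i ` Q (Suc (Suc k)) i)"

text \<open>H_n of the complex colim Q_\<bullet> vanishes (n > 0), i.e. colim_n F = 0 where colim_n is the
  n-th left derived functor of colim_P, computed from the free resolution Q.  Here
  colim Q_k = dsum (Q k) UNIV / colim_rel (Q k) (q k) UNIV and colim(dQ k) is induced
  componentwise: every cycle is a boundary modulo the relations.\<close>
definition colim_H_zero :: "('r::comm_ring_1 \<Rightarrow> 'q::ab_group_add \<Rightarrow> 'q) \<Rightarrow> (nat \<Rightarrow> 'p::order \<Rightarrow> 'q set)
    \<Rightarrow> (nat \<Rightarrow> 'p \<Rightarrow> 'p \<Rightarrow> 'q \<Rightarrow> 'q) \<Rightarrow> (nat \<Rightarrow> 'p \<Rightarrow> 'q \<Rightarrow> 'q) \<Rightarrow> nat \<Rightarrow> bool" where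
  "colim_H_zero s' Q q dQ n \<longleftrightarrow>
     (\<forall>x\<in>dsum (Q n) UNIV. (\<lambda>i. dQ (n - 1) i (x i)) \<in> colim_rel (Q (n - 1)) (q (n - 1)) UNIV \<longrightarrow>
        (\<exists>y\<in>dsum (Q (Suc n)) UNIV. (\<lambda>i. x i - dQ n i (y i)) \<in> colim_rel (Q n) (q n) UNIV))"

end

theory Submission
  imports Defs
begin

definition gterm :: "('p \<Rightarrow> 'p \<Rightarrow> 'm \<Rightarrow> 'm) \<Rightarrow> ('p \<times> 'p \<times> 'm) \<Rightarrow> 'p \<Rightarrow> 'm::ab_group_add" where
  "gterm f g t = (case g of (k,l,a) \<Rightarrow> (if t = k then a else 0) - (if t = l then f k l a else 0))"

definition genval :: "('p \<Rightarrow> 'p \<Rightarrow> 'm \<Rightarrow> 'm) \<Rightarrow> ('p \<times> 'p \<times> 'm) list \<Rightarrow> 'p \<Rightarrow> 'm::ab_group_add" where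
  "genval f gs t = (\<Sum>g\<leftarrow>gs. gterm f g t)"

lemma genval_Nil[simp]: "genval f [] t = 0" by (simp add: genval_def)
lemma genval_Cons[simp]: "genval f ((k,l,a)#gs) t = (if t = k then a else 0) - (if t = l then f k l a else 0) + genval f gs t"
  by (simp add: genval_def gterm_def)

definition valid :: "('p::order \<Rightarrow> 'm set) \<Rightarrow> ('p \<times> 'p \<times> 'm) list \<Rightarrow> 'p set \<Rightarrow> bool" where
  "valid S gs A \<longleftrightarrow> (\<forall>k l a. (k,l,a) \<in> set gs \<longrightarrow> k \<in> A \<and> l \<in> A \<and> k \<le> l \<and> a \<in> S k)"

definition idx :: "('p \<times> 'p \<times> 'm) list \<Rightarrow> 'p set" where
  "idx gs = fst ` set gs \<union> (fst \<circ> snd) ` set gs"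

definition tgts :: "('p \<times> 'p \<times> 'm) list \<Rightarrow> 'p set" where
  "tgts gs = (fst \<circ> snd) ` set gs"

lemma valid_Nil[simp]: "valid S [] A" by (simp add: valid_def)
lemma valid_Cons[simp]: "valid S ((k,l,a)#gs) A \<longleftrightarrow> k \<in> A \<and> l \<in> A \<and> k \<le> l \<and> a \<in> S k \<and> valid S gs A"
  by (auto simp: valid_def)
lemma valid_append[simp]: "valid S (gs @ hs) A \<longleftrightarrow> valid S gs A \<and> valid S hs A"
  by (auto simp: valid_def)
lemma valid_filter: "valid S gs A \<Longrightarrow> valid S (filter P gs) A"
  by (auto simp: valid_def)
lemma valid_mono: "valid S gs A \<Longrightarrow> A \<subseteq> B \<Longrightarrow> valid S gs B"
  by (auto simp: valid_def)

lemma finite_idx[simp]: "finite (idx gs)" by (simp add: idx_def)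
lemma finite_tgts[simp]: "finite (tgts gs)" by (simp add: tgts_def)

lemma genval_append: "genval f (gs @ hs) t = genval f gs t + genval f hs t"
  by (simp add: genval_def)

lemma genval_filter: "genval f gs t = genval f (filter P gs) t + genval f (filter (\<lambda>g. \<not> P g) gs) t"
proof (induction gs)
  case Nil show ?case by simp
next
  case (Cons g gs)
  show ?case using Cons by (cases "P g") (simp_all add: genval_def add.assoc add.left_commute)
qed

lemma genval_out: "t \<notin> idx gs \<Longrightarrow> genval f gs t = 0"
proof (induction gs)
  case (Cons g gs)
  obtain k l a where g: "g = (k,l,a)" by (cases g)
  show ?case using Cons unfolding g by (auto simp: idx_def)
qed simp

lemma supp_genval: "{t. genval f gs t \<noteq> 0} \<subseteq> idx gs"
proof
  fix x assume "x \<in> {t. genval f gs t \<noteq> 0}"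
  then have "genval f gs x \<noteq> 0" by simp
  then show "x \<in> idx gs" using genval_out[of x gs f] by auto
qed

lemma finite_supp_genval: "finite {t. genval f gs t \<noteq> 0}"
  by (rule finite_subset[OF supp_genval finite_idx])

locale gfun =
  fixes S :: "'p::order \<Rightarrow> 'm::ab_group_add set" and f :: "'p \<Rightarrow> 'p \<Rightarrow> 'm \<Rightarrow> 'm"
  assumes zero_in[simp]: "0 \<in> S i"
    and add_in: "x \<in> S i \<Longrightarrow> y \<in> S i \<Longrightarrow> x + y \<in> S i"
    and neg_in: "x \<in> S i \<Longrightarrow> - x \<in> S i"
    and map_in: "i \<le> j \<Longrightarrow> x \<in> S i \<Longrightarrow> f i j x \<in> S j"
    and map_add: "i \<le> j \<Longrightarrow> x \<in> S i \<Longrightarrow> y \<in> S i \<Longrightarrow> f i j (x + y) = f i j x + f i j y"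
    and map_id: "x \<in> S i \<Longrightarrow> f i i x = x"
    and map_comp: "i \<le> j \<Longrightarrow> j \<le> k \<Longrightarrow> x \<in> S i \<Longrightarrow> f j k (f i j x) = f i k x"
begin

lemma diff_in: "x \<in> S i \<Longrightarrow> y \<in> S i \<Longrightarrow> x - y \<in> S i"
  unfolding diff_conv_add_uminus by (intro add_in neg_in)

lemma map_zero: "i \<le> j \<Longrightarrow> f i j 0 = 0"
proof -
  assume "i \<le> j"
  then have e: "f i j (0 + 0) = f i j 0 + f i j 0" by (intro map_add) auto
  show ?thesis using e by (metis add.right_neutral add_left_cancel)
qed

lemma map_neg: "i \<le> j \<Longrightarrow> x \<in> S i \<Longrightarrow> f i j (- x) = - f i j x"
proof -
  assume a: "i \<le> j" "x \<in> S i"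
  then have e: "f i j (x + - x) = f i j x + f i j (- x)" by (intro map_add neg_in) auto
  then have "f i j x + f i j (- x) = 0" using map_zero[OF a(1)] by (metis add.right_inverse)
  then show ?thesis by (metis neg_eq_iff_add_eq_0)
qed

lemma map_diff: "i \<le> j \<Longrightarrow> x \<in> S i \<Longrightarrow> y \<in> S i \<Longrightarrow> f i j (x - y) = f i j x - f i j y"
proof -
  assume a: "i \<le> j" "x \<in> S i" "y \<in> S i"
  have "f i j (x - y) = f i j (x + -y)" by simp
  also have "\<dots> = f i j x + f i j (-y)" using a by (intro map_add neg_in)
  also have "\<dots> = f i j x - f i j y" using map_neg a by simp
  finally show ?thesis .
qed

lemma sum_in: "(\<And>a. a \<in> B \<Longrightarrow> g a \<in> S i) \<Longrightarrow> sum g B \<in> S i"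
  by (induction B rule: infinite_finite_induct) (auto intro: add_in)

lemma map_sum: "i \<le> j \<Longrightarrow> (\<And>a. a \<in> B \<Longrightarrow> g a \<in> S i) \<Longrightarrow> f i j (sum g B) = (\<Sum>a\<in>B. f i j (g a))"
  by (induction B rule: infinite_finite_induct) (auto simp: map_zero map_add sum_in)

lemma if_in: "(t = k \<Longrightarrow> a \<in> S k) \<Longrightarrow> (if t = k then a else 0) \<in> S t"
  by auto

lemma genval_in: "valid S gs A \<Longrightarrow> genval f gs t \<in> S t"
proof (induction gs)
  case (Cons g gs)
  obtain k l a where g: "g = (k,l,a)" by (cases g)
  show ?case using Cons unfolding g by (auto intro!: diff_in add_in map_in)
qed simp

lemma genval_rel: "valid S gs A \<Longrightarrow> genval f gs \<in> colim_rel S f A"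
proof (induction gs)
  case Nil then show ?case using colim_rel.zero by (simp add: genval_def)
next
  case (Cons g gs)
  obtain k l a where g: "g = (k,l,a)" by (cases g)
  have "(\<lambda>t. genval f gs t + (if t = k then a else 0) - (if t = l then f k l a else 0)) \<in> colim_rel S f A"
    using Cons colim_rel.step[of "genval f gs" S f A k l a] unfolding g by simp
  moreover have "(\<lambda>t. genval f gs t + (if t = k then a else 0) - (if t = l then f k l a else 0)) = genval f (g#gs)"
    unfolding g by (auto simp: algebra_simps)
  ultimately show ?case by simp
qed

lemma rel_genval: "x \<in> colim_rel S f A \<Longrightarrow> \<exists>gs. valid S gs A \<and> x = genval f gs"
proof (induction rule: colim_rel.induct)
  case zero
  then show ?case by (intro exI[of _ "[]"]) (auto simp: fun_eq_iff)
next
  case (step x k j a)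
  then obtain gs where "valid S gs A" "x = genval f gs" by blast
  then show ?case using step by (intro exI[of _ "(k,j,a)#gs"]) (auto simp: fun_eq_iff algebra_simps)
qed

lemma rel_iff: "x \<in> colim_rel S f A \<longleftrightarrow> (\<exists>gs. valid S gs A \<and> x = genval f gs)"
  using rel_genval genval_rel by blast

definition negl :: "('p \<times> 'p \<times> 'm) list \<Rightarrow> ('p \<times> 'p \<times> 'm) list" where
  "negl gs = map (\<lambda>(k,l,a). (k,l,-a)) gs"

lemma valid_negl: "valid S gs A \<Longrightarrow> valid S (negl gs) A"
proof (induction gs)
  case (Cons g gs)
  obtain k l a where g: "g = (k,l,a)" by (cases g)
  show ?case using Cons unfolding g by (simp add: negl_def neg_in)
qed (simp add: negl_def)

lemma genval_negl: "valid S gs A \<Longrightarrow> genval f (negl gs) t = - genval f gs t"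
proof (induction gs)
  case (Cons g gs)
  obtain k l a where g: "g = (k,l,a)" by (cases g)
  have v: "k \<le> l" "a \<in> S k" "valid S gs A" using Cons(2) unfolding g by auto
  have "genval f (negl (g#gs)) t = (if t = k then -a else 0) - (if t = l then f k l (-a) else 0) + genval f (negl gs) t"
    unfolding g by (simp add: negl_def)
  also have "\<dots> = (if t = k then -a else 0) - (if t = l then - f k l a else 0) - genval f gs t"
    using Cons(1)[OF v(3)] map_neg[OF v(1,2)] by simp
  also have "\<dots> = - genval f (g#gs) t" unfolding g by simp
  finally show ?case .
qed (simp add: negl_def)

lemma rel_add: "x \<in> colim_rel S f A \<Longrightarrow> y \<in> colim_rel S f A \<Longrightarrow> (\<lambda>t. x t + y t) \<in> colim_rel S f A"
proof -
  assume "x \<in> colim_rel S f A" "y \<in> colim_rel S f A"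
  then obtain gs hs where "valid S gs A" "x = genval f gs" "valid S hs A" "y = genval f hs"
    using rel_genval by metis
  moreover have "(\<lambda>t. x t + y t) = genval f (gs @ hs)"
    using \<open>x = genval f gs\<close> \<open>y = genval f hs\<close> by (simp add: genval_append fun_eq_iff)
  ultimately show ?thesis using genval_rel[of "gs @ hs" A] by simp
qed

lemma rel_neg: "x \<in> colim_rel S f A \<Longrightarrow> (\<lambda>t. - x t) \<in> colim_rel S f A"
proof -
  assume "x \<in> colim_rel S f A"
  then obtain gs where "valid S gs A" "x = genval f gs"
    using rel_genval by metis
  moreover have "(\<lambda>t. - x t) = genval f (negl gs)"
    using \<open>x = genval f gs\<close> genval_negl[OF \<open>valid S gs A\<close>] by (simp add: fun_eq_iff)
  ultimately show ?thesis using genval_rel[OF valid_negl, of gs A] by simp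
qed

lemma rel_mono: "x \<in> colim_rel S f A \<Longrightarrow> A \<subseteq> B \<Longrightarrow> x \<in> colim_rel S f B"
proof -
  assume "x \<in> colim_rel S f A" "A \<subseteq> B"
  then obtain gs where "valid S gs A" "x = genval f gs" using rel_genval by blast
  then show ?thesis using genval_rel[OF valid_mono[OF _ \<open>A \<subseteq> B\<close>]] by simp
qed

end

lemma genval_star:
  assumes "distinct ks"
  shows "genval f (map (\<lambda>k. (k, m, w k)) ks) t =
    (if t \<in> set ks then w t else 0) - (if t = m then (\<Sum>k\<in>set ks. f k m (w k)) else 0)"
  using assms
proof (induction ks)
  case Nil then show ?case by simp
next
  case (Cons k ks)
  have nk: "k \<notin> set ks" using Cons by simp
  have IH: "genval f (map (\<lambda>k. (k, m, w k)) ks) t =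
    (if t \<in> set ks then w t else 0) - (if t = m then (\<Sum>k\<in>set ks. f k m (w k)) else 0)"
    using Cons by simp
  have s: "(\<Sum>k\<in>set (k#ks). f k m (w k)) = f k m (w k) + (\<Sum>k\<in>set ks. f k m (w k))"
    using nk by simp
  have "genval f (map (\<lambda>k. (k, m, w k)) (k#ks)) t = (if t = k then w k else 0) - (if t = m then f k m (w k) else 0)
      + genval f (map (\<lambda>k. (k, m, w k)) ks) t" by simp
  also have "\<dots> = (if t = k then w k else 0) - (if t = m then f k m (w k) else 0)
      + ((if t \<in> set ks then w t else 0) - (if t = m then (\<Sum>k\<in>set ks. f k m (w k)) else 0))"
    using IH by simp
  also have "\<dots> = (if t \<in> set (k#ks) then w t else 0) - (if t = m then (\<Sum>k\<in>set (k#ks). f k m (w k)) else 0)"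
    unfolding s using nk by (cases "t = k"; cases "t = m") (simp_all add: algebra_simps)
  finally show ?case .
qed

lemma level_induct:
  fixes \<mu> :: "'a \<Rightarrow> 'p set" and d :: "'p \<Rightarrow> nat"
  assumes step: "\<And>a. finite (\<mu> a) \<Longrightarrow>
      (\<And>b j. finite (\<mu> b) \<Longrightarrow> j \<in> \<mu> a \<Longrightarrow> (\<forall>t\<in>\<mu> a. d t \<le> d j) \<Longrightarrow>
          \<mu> b \<subseteq> (\<mu> a - {j}) \<union> {t. d t < d j} \<Longrightarrow> P b) \<Longrightarrow> P a"
    and fin: "finite (\<mu> a)"
  shows "P a"
proof -
  have main: "\<forall>X. finite X \<longrightarrow> X \<subseteq> {t. d t = D} \<longrightarrow>
      (\<forall>a. finite (\<mu> a) \<longrightarrow> \<mu> a \<subseteq> {t. d t < D} \<union> X \<longrightarrow> P a)" for D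
    proof (induction D rule: less_induct)
      case (less D)
      have low: "P b" if fb: "finite (\<mu> b)" and sb: "\<mu> b \<subseteq> {t. d t < D}" for b
      proof (cases "\<mu> b = {}")
        case True
        show ?thesis by (rule step[OF fb]) (use True in auto)
      next
        case False
        define D' where "D' = Max (d ` \<mu> b)"
        have "D' \<in> d ` \<mu> b" using Max_in[of "d ` \<mu> b"] fb False unfolding D'_def by auto
        then obtain j where j: "j \<in> \<mu> b" "d j = D'" by auto
        have "D' < D" using j sb by auto
        moreover have "\<mu> b \<subseteq> {t. d t < D'} \<union> (\<mu> b \<inter> {t. d t = D'})"
          using Max_ge[of "d ` \<mu> b"] fb unfolding D'_def by fastforce
        moreover have "finite (\<mu> b \<inter> {t. d t = D'})" using fb by simp
        ultimately show ?thesis using less.IH[of D'] fb by blast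
      qed
      show ?case
      proof (rule allI, rule impI, rule impI)
        fix X :: "'p set"
        assume fX: "finite X" and XD: "X \<subseteq> {t. d t = D}"
        show "\<forall>a. finite (\<mu> a) \<longrightarrow> \<mu> a \<subseteq> {t. d t < D} \<union> X \<longrightarrow> P a"
          using fX XD
        proof (induction X rule: finite_psubset_induct)
          case (psubset X)
          show "\<forall>a. finite (\<mu> a) \<longrightarrow> \<mu> a \<subseteq> {t. d t < D} \<union> X \<longrightarrow> P a"
          proof (intro allI impI)
            fix a assume fa: "finite (\<mu> a)" and sa: "\<mu> a \<subseteq> {t. d t < D} \<union> X"
            show "P a"
            proof (rule step[OF fa])
              fix b j assume fb: "finite (\<mu> b)" and ja: "j \<in> \<mu> a" and mx: "\<forall>t\<in>\<mu> a. d t \<le> d j"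
                and sb: "\<mu> b \<subseteq> (\<mu> a - {j}) \<union> {t. d t < d j}"
              show "P b"
              proof (cases "d j < D")
                case True
                then have "\<mu> b \<subseteq> {t. d t < D}" using sb mx by fastforce
                then show ?thesis using low fb by blast
              next
                case False
                then have jX: "j \<in> X" "d j = D" using ja sa psubset.prems by auto
                have "\<mu> b \<subseteq> {t. d t < D} \<union> (X - {j})" using sb sa jX by auto
                moreover have "X - {j} \<subset> X" using jX by auto
                moreover have "X - {j} \<subseteq> {t. d t = D}" using psubset.prems by auto
                ultimately show ?thesis using psubset.IH[of "X - {j}"] fb by blast
              qed
            qed
          qed
        qed
      qed
    qed
  have "\<mu> a \<subseteq> {t. d t < Suc (Max (d ` \<mu> a))} \<union> {}"
  proof
    fix x assume "x \<in> \<mu> a"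
    then have "d x \<le> Max (d ` \<mu> a)" using Max_ge[of "d ` \<mu> a" "d x"] fin by blast
    then show "x \<in> {t. d t < Suc (Max (d ` \<mu> a))} \<union> {}" by simp
  qed
  then show ?thesis using main[of "Suc (Max (d ` \<mu> a))"] fin by blast
qed

context gfun begin

definition phi :: "'p \<Rightarrow> ('p \<Rightarrow> 'm) \<Rightarrow> 'm" where
  "phi m x = (\<Sum>t\<in>{t. x t \<noteq> 0}. f t m (x t))"

lemma phi_U:
  assumes "finite U" "{t. x t \<noteq> 0} \<subseteq> U" "U \<subseteq> {t. t \<le> m}"
  shows "phi m x = (\<Sum>t\<in>U. f t m (x t))"
  unfolding phi_def
proof (rule sum.mono_neutral_left[OF assms(1,2)])
  show "\<forall>t\<in>U - {t. x t \<noteq> 0}. f t m (x t) = 0" using assms(3) map_zero by auto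
qed

lemma sum_delta_map:
  assumes "finite U" "k \<in> U" "U \<subseteq> {t. t \<le> m}"
  shows "(\<Sum>t\<in>U. f t m (if t = k then a else 0)) = f k m a"
proof -
  have "(\<Sum>t\<in>U. f t m (if t = k then a else 0)) = (\<Sum>t\<in>U. if t = k then f k m a else 0)"
    by (rule sum.cong) (use assms(3) map_zero in auto)
  also have "\<dots> = f k m a" using assms(1,2) by (simp add: sum.delta)
  finally show ?thesis .
qed

lemma cocone_U:
  assumes "valid S gs A" "\<forall>k l a. (k,l,a) \<in> set gs \<longrightarrow> l \<le> m"
    "finite U" "idx gs \<subseteq> U" "U \<subseteq> {t. t \<le> m}"
  shows "(\<Sum>t\<in>U. f t m (genval f gs t)) = 0"
  using assms(1,2,4)
proof (induction gs)
  case Nil then show ?case using map_zero assms(5) by (simp add: subset_eq)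
next
  case (Cons g gs)
  obtain k l a where g: "g = (k,l,a)" by (cases g)
  have v: "k \<le> l" "a \<in> S k" "valid S gs A" "l \<le> m" using Cons(2,3) unfolding g by auto
  have kl: "k \<in> U" "l \<in> U" using Cons(4) unfolding g idx_def by auto
  have i2: "idx gs \<subseteq> U" using Cons(4) unfolding g idx_def by auto
  have "\<forall>k l a. (k,l,a) \<in> set gs \<longrightarrow> l \<le> m" using Cons(3) by auto
  then have IH: "(\<Sum>t\<in>U. f t m (genval f gs t)) = 0" using Cons(1)[OF v(3) _ i2] by blast
  have km: "k \<le> m" using v by auto
  have eq: "f t m (genval f (g#gs) t) = f t m (if t = k then a else 0) - f t m (if t = l then f k l a else 0)
     + f t m (genval f gs t)" if "t \<in> U" for t
  proof -
    have tm: "t \<le> m" using that assms(5) by auto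
    have i1: "(if t = k then a else 0) \<in> S t" using v by auto
    have i2: "(if t = l then f k l a else 0) \<in> S t" using v map_in by auto
    have i3: "genval f gs t \<in> S t" using genval_in[OF v(3)] .
    have "f t m (genval f (g#gs) t) = f t m ((if t = k then a else 0) - (if t = l then f k l a else 0) + genval f gs t)"
      unfolding g by simp
    also have "\<dots> = f t m ((if t = k then a else 0) - (if t = l then f k l a else 0)) + f t m (genval f gs t)"
      by (rule map_add[OF tm diff_in[OF i1 i2] i3])
    also have "\<dots> = f t m (if t = k then a else 0) - f t m (if t = l then f k l a else 0) + f t m (genval f gs t)"
      by (simp only: map_diff[OF tm i1 i2])
    finally show ?thesis .
  qed
  have "(\<Sum>t\<in>U. f t m (genval f (g#gs) t)) = (\<Sum>t\<in>U. f t m (if t = k then a else 0))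
     - (\<Sum>t\<in>U. f t m (if t = l then f k l a else 0)) + (\<Sum>t\<in>U. f t m (genval f gs t))"
    using eq by (simp add: sum.distrib sum_subtractf)
  also have "\<dots> = f k m a - f l m (f k l a) + 0"
    using sum_delta_map[OF assms(3) kl(1) assms(5)] sum_delta_map[OF assms(3) kl(2) assms(5)] IH by simp
  also have "\<dots> = 0" using map_comp[OF v(1) v(4) v(2)] by simp
  finally show ?case .
qed

lemma idx_le:
  assumes "valid S gs A" "\<forall>k l a. (k,l,a) \<in> set gs \<longrightarrow> l \<le> m"
  shows "idx gs \<subseteq> {t. t \<le> m}"
proof
  fix t assume "t \<in> idx gs"
  then obtain k l a where g: "(k,l,a) \<in> set gs" "t = k \<or> t = l" unfolding idx_def by force
  have "k \<le> l" using assms(1) g(1) unfolding valid_def by blast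
  moreover have "l \<le> m" using assms(2) g(1) by blast
  ultimately show "t \<in> {t. t \<le> m}" using g(2) by auto
qed

lemma cocone:
  assumes "valid S gs A" "\<forall>k l a. (k,l,a) \<in> set gs \<longrightarrow> l \<le> m"
  shows "phi m (genval f gs) = 0"
proof -
  have "phi m (genval f gs) = (\<Sum>t\<in>idx gs. f t m (genval f gs t))"
    by (rule phi_U[OF finite_idx supp_genval idx_le[OF assms]])
  also have "\<dots> = 0" by (rule cocone_U[OF assms finite_idx order_refl idx_le[OF assms]])
  finally show ?thesis .
qed

lemma phi_add:
  assumes "finite {t. x t \<noteq> 0}" "finite {t. y t \<noteq> 0}"
    "{t. x t \<noteq> 0} \<subseteq> {t. t \<le> m}" "{t. y t \<noteq> 0} \<subseteq> {t. t \<le> m}"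
    "\<And>t. x t \<in> S t" "\<And>t. y t \<in> S t"
  shows "phi m (\<lambda>t. x t + y t) = phi m x + phi m y"
proof -
  let ?U = "{t. x t \<noteq> 0} \<union> {t. y t \<noteq> 0}"
  have fU: "finite ?U" using assms by simp
  have sU: "?U \<subseteq> {t. t \<le> m}" using assms by simp
  have "phi m (\<lambda>t. x t + y t) = (\<Sum>t\<in>?U. f t m (x t + y t))"
    by (rule phi_U[OF fU _ sU]) auto
  also have "\<dots> = (\<Sum>t\<in>?U. f t m (x t) + f t m (y t))"
    by (rule sum.cong) (use sU assms(5,6) map_add in auto)
  also have "\<dots> = phi m x + phi m y"
    by (simp add: sum.distrib phi_U[OF fU _ sU])
  finally show ?thesis .
qed

lemma ImF_zero: "0 \<in> ImF S f j"
proof -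
  show ?thesis unfolding ImF_def
    by (rule CollectI, rule exI[of _ "{}"], rule exI[of _ "\<lambda>_. 0"]) simp
qed

lemma ImF_neg:
  assumes "y \<in> ImF S f j" shows "- y \<in> ImF S f j"
proof -
  obtain K z where K: "finite K" "K \<subseteq> {k. k < j}" "\<forall>k\<in>K. z k \<in> S k" "y = (\<Sum>k\<in>K. f k j (z k))"
    using assms unfolding ImF_def by blast
  have "- y = (\<Sum>k\<in>K. - f k j (z k))"
    unfolding K(4) by (simp add: sum_negf)
  also have "\<dots> = (\<Sum>k\<in>K. f k j (- z k))"
  proof (rule sum.cong)
    fix k assume "k \<in> K"
    then have "k \<le> j" "z k \<in> S k" using K(2,3) by auto
    then show "- f k j (z k) = f k j (- z k)" using map_neg by simp
  qed simp
  finally have "- y = (\<Sum>k\<in>K. f k j (- z k))" .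
  then show ?thesis unfolding ImF_def
    by (intro CollectI exI[of _ K] exI[of _ "\<lambda>k. - z k"]) (use K neg_in in auto)
qed

lemma ImF_add_single:
  assumes "y \<in> ImF S f j" "k < j" "a \<in> S k"
  shows "y + f k j a \<in> ImF S f j"
proof -
  obtain K z where K: "finite K" "K \<subseteq> {k. k < j}" "\<forall>k\<in>K. z k \<in> S k" "y = (\<Sum>k\<in>K. f k j (z k))"
    using assms unfolding ImF_def by blast
  show ?thesis
  proof (cases "k \<in> K")
    case True
    let ?z = "z(k := z k + a)"
    have e1: "(\<Sum>k'\<in>K. f k' j (?z k')) = f k j (?z k) + (\<Sum>k'\<in>K - {k}. f k' j (?z k'))"
      by (rule sum.remove[OF K(1) True])
    have e2: "f k j (?z k) = f k j (z k) + f k j a"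
      using map_add[OF less_imp_le[OF assms(2)] K(3)[rule_format, OF True] assms(3)] by simp
    have e3: "(\<Sum>k'\<in>K - {k}. f k' j (?z k')) = (\<Sum>k'\<in>K - {k}. f k' j (z k'))"
      by (rule sum.cong) auto
    have e4: "y = f k j (z k) + (\<Sum>k'\<in>K - {k}. f k' j (z k'))"
      unfolding K(4) by (rule sum.remove[OF K(1) True])
    have "y + f k j a = (\<Sum>k'\<in>K. f k' j (?z k'))"
      unfolding e1 e2 e3 e4 by (simp only: ac_simps)
    moreover have "\<forall>k'\<in>K. ?z k' \<in> S k'" using K(3) assms(3) True by (auto intro: add_in)
    ultimately show ?thesis unfolding ImF_def
      by (intro CollectI exI[of _ K] exI[of _ ?z]) (use K(1,2) in auto)
  next
    case False
    let ?z = "z(k := a)"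
    have "(\<Sum>k'\<in>insert k K. f k' j (?z k')) = f k j (?z k) + (\<Sum>k'\<in>K. f k' j (?z k'))"
      by (rule sum.insert[OF K(1) False])
    also have "f k j (?z k) = f k j a" by simp
    also have "(\<Sum>k'\<in>K. f k' j (?z k')) = y"
      unfolding K(4) by (rule sum.cong) (use False in auto)
    finally have "y + f k j a = (\<Sum>k'\<in>insert k K. f k' j (?z k'))" by (simp add: add.commute)
    moreover have "\<forall>k'\<in>insert k K. ?z k' \<in> S k'" using K(3) assms(3) by auto
    moreover have "insert k K \<subseteq> {k. k < j}" using K(2) assms(2) by auto
    ultimately show ?thesis unfolding ImF_def
      by (intro CollectI exI[of _ "insert k K"] exI[of _ ?z]) (use K(1) in auto)
  qed
qed

end

lemma obtain_max:
  fixes d :: "'p \<Rightarrow> nat"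
  assumes "finite M" "M \<noteq> {}"
  obtains j where "j \<in> M" "\<forall>t\<in>M. d t \<le> d j"
proof -
  have "Max (d ` M) \<in> d ` M" using Max_in assms by auto
  then obtain j where j: "j \<in> M" "d j = Max (d ` M)" by auto
  have "\<forall>t\<in>M. d t \<le> d j" using j(2) Max_ge assms(1) by auto
  then show ?thesis using that j(1) by blast
qed

context gfun begin

lemma pp_imp_latching:
  fixes d :: "'p \<Rightarrow> nat"
  assumes filt: "filtration d" and pp: "pseudo_projective_at S f i"
  shows "latching_mono S f i"
  unfolding latching_mono_def
proof (intro ballI impI)
  fix x assume x0: "x \<in> dsum S {j. j < i}" and s0: "(\<Sum>j\<in>{j. x j \<noteq> 0}. f j i (x j)) = 0"
  have fin0: "finite {t. x t \<noteq> 0}" using x0 unfolding dsum_def by blast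
  let ?P = "\<lambda>x. x \<in> dsum S {j. j < i} \<longrightarrow> phi i x = 0 \<longrightarrow> x \<in> colim_rel S f {j. j < i}"
  have "?P x"
  proof (rule level_induct[of "\<lambda>x::'p \<Rightarrow> 'm. {t. x t \<noteq> 0}" d ?P x])
    fix x :: "'p \<Rightarrow> 'm"
    assume fin: "finite {t. x t \<noteq> 0}"
      and IH: "\<And>b j. finite {t. b t \<noteq> 0} \<Longrightarrow> j \<in> {t. x t \<noteq> 0} \<Longrightarrow> (\<forall>t\<in>{t. x t \<noteq> 0}. d t \<le> d j) \<Longrightarrow>
          {t. b t \<noteq> 0} \<subseteq> ({t. x t \<noteq> 0} - {j}) \<union> {t. d t < d j} \<Longrightarrow> ?P b"
    show "?P x"
    proof (intro impI)
      assume xd: "x \<in> dsum S {j. j < i}" and px: "phi i x = 0"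
      have xS: "\<And>t. x t \<in> S t" and xi: "\<And>t. x t \<noteq> 0 \<Longrightarrow> t < i" using xd unfolding dsum_def by auto
      show "x \<in> colim_rel S f {j. j < i}"
      proof (cases "{t. x t \<noteq> 0} = {}")
        case True
        then have "x = (\<lambda>_. 0)" by auto
        then show ?thesis using colim_rel.zero by simp
      next
        case False
        obtain j where j: "j \<in> {t. x t \<noteq> 0}" "\<forall>t\<in>{t. x t \<noteq> 0}. d t \<le> d j"
          using obtain_max[OF fin False] by blast
        have ji: "j < i" using j xi by auto
        have jmax: "j \<in> maxs {t. x t \<noteq> 0}"
        proof -
          have "\<not> j < k" if "k \<in> {t. x t \<noteq> 0}" for k
          proof
            assume "j < k"
            then have "d j < d k" using filt unfolding filtration_def by blast
            then show False using j(2) that by fastforce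
          qed
          then show ?thesis unfolding maxs_def using j(1) by blast
        qed
        have ppi: "\<And>J y j'. finite J \<Longrightarrow> J \<subseteq> {j. j \<le> i} \<Longrightarrow> (\<forall>j\<in>J. y j \<in> S j) \<Longrightarrow>
            (\<Sum>j\<in>J. f j i (y j)) = 0 \<Longrightarrow> j' \<in> maxs J \<Longrightarrow> y j' \<in> ImF S f j'"
          using pp unfolding pseudo_projective_at_def by blast
        have "x j \<in> ImF S f j"
        proof (rule ppi[OF fin _ _ _ jmax])
          show "{t. x t \<noteq> 0} \<subseteq> {j. j \<le> i}" using xi by (auto intro: less_imp_le)
          show "\<forall>j\<in>{t. x t \<noteq> 0}. x j \<in> S j" using xS by blast
          show "(\<Sum>j\<in>{t. x t \<noteq> 0}. f j i (x j)) = 0" using px unfolding phi_def .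
        qed
        then obtain K z where K: "finite K" "K \<subseteq> {k. k < j}" "\<forall>k\<in>K. z k \<in> S k"
          "x j = (\<Sum>k\<in>K. f k j (z k))"
          unfolding ImF_def by blast
        obtain ks where ks: "set ks = K" "distinct ks" using finite_distinct_list[OF K(1)] by blast
        let ?gs = "map (\<lambda>k. (k, j, z k)) ks"
        have gv: "genval f ?gs t = (if t \<in> K then z t else 0) - (if t = j then x j else 0)" for t
          using genval_star[OF ks(2), of f j z t] ks(1) K(4) by simp
        have vg: "valid S ?gs {j. j < i}"
          unfolding valid_def using ks(1) K(2,3) ji by auto
        have tg: "\<forall>k l a. (k,l,a) \<in> set ?gs \<longrightarrow> l \<le> i" using ji by auto
        define x' where "x' = (\<lambda>t. x t + genval f ?gs t)"
        have x'S: "x' t \<in> S t" for t unfolding x'_def by (rule add_in[OF xS genval_in[OF vg]])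
        have supp': "{t. x' t \<noteq> 0} \<subseteq> ({t. x t \<noteq> 0} - {j}) \<union> K"
        proof
          fix t assume "t \<in> {t. x' t \<noteq> 0}"
          then have nz: "x' t \<noteq> 0" by simp
          have jK: "j \<notin> K" using K(2) by auto
          show "t \<in> ({t. x t \<noteq> 0} - {j}) \<union> K"
          proof (cases "t \<in> K")
            case False
            then have tj: "t \<noteq> j"
              using nz jK unfolding x'_def gv by auto
            moreover have "x t \<noteq> 0" using nz False tj unfolding x'_def gv by auto
            ultimately show ?thesis by auto
          qed simp
        qed
        have Kd: "K \<subseteq> {t. d t < d j}" using K(2) filt unfolding filtration_def by auto
        have fin': "finite {t. x' t \<noteq> 0}" using finite_subset[OF supp'] fin K(1) by auto
        have x'i: "t < i" if "x' t \<noteq> 0" for t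
        proof -
          have "t \<in> ({t. x t \<noteq> 0} - {j}) \<union> K" using supp' that by blast
          then show ?thesis using xi K(2) ji by (auto intro: less_trans)
        qed
        have x'd: "x' \<in> dsum S {j. j < i}"
          unfolding dsum_def using fin' x'S x'i by auto
        have "phi i x' = phi i x + phi i (genval f ?gs)"
          unfolding x'_def
        proof (rule phi_add[OF fin finite_supp_genval])
          show "{t. x t \<noteq> 0} \<subseteq> {t. t \<le> i}" using xi by (auto intro: less_imp_le)
          show "{t. genval f ?gs t \<noteq> 0} \<subseteq> {t. t \<le> i}"
            by (rule subset_trans[OF supp_genval idx_le[OF vg tg]])
          show "\<And>t. x t \<in> S t" by (rule xS)
          show "\<And>t. genval f ?gs t \<in> S t" by (rule genval_in[OF vg])
        qed
        then have px': "phi i x' = 0" using px cocone[OF vg tg] by simp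
        have sub: "{t. x' t \<noteq> 0} \<subseteq> ({t. x t \<noteq> 0} - {j}) \<union> {t. d t < d j}"
          using supp' Kd by blast
        have "?P x'" by (rule IH[OF fin' j(1) j(2) sub])
        then have xr: "x' \<in> colim_rel S f {j. j < i}" using x'd px' by blast
        have r2: "(\<lambda>t. - genval f ?gs t) \<in> colim_rel S f {j. j < i}"
          by (rule rel_neg[OF genval_rel[OF vg]])
        have "(\<lambda>t. x' t + - genval f ?gs t) \<in> colim_rel S f {j. j < i}"
          using rel_add[OF xr r2] by simp
        moreover have "(\<lambda>t. x' t + - genval f ?gs t) = x" unfolding x'_def by auto
        ultimately show ?thesis by simp
      qed
    qed
  qed (rule fin0)
  then show "x \<in> colim_rel S f {j. j < i}" using x0 s0 unfolding phi_def by blast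
qed

end

context gfun begin

lemma base1b:
  assumes "valid S gs A" "\<forall>k l a. (k,l,a) \<in> set gs \<longrightarrow> \<not> j0 < l"
  shows "genval f gs j0 \<in> ImF S f j0"
  using assms
proof (induction gs)
  case Nil then show ?case using ImF_zero by simp
next
  case (Cons g gs)
  obtain k l a where g: "g = (k,l,a)" by (cases g)
  have v: "k \<le> l" "a \<in> S k" "valid S gs A" "\<not> j0 < l" using Cons(2,3) unfolding g by auto
  have "\<forall>k l a. (k,l,a) \<in> set gs \<longrightarrow> \<not> j0 < l" using Cons(3) by auto
  then have IH: "genval f gs j0 \<in> ImF S f j0" using Cons(1)[OF v(3)] by blast
  have e: "genval f (g#gs) j0 = (if j0 = k then a else 0) - (if j0 = l then f k l a else 0) + genval f gs j0"
    unfolding g by simp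
  show ?case
  proof (cases "j0 = k")
    case True
    then have "l = j0" using v(1,4) by auto
    then have "genval f (g#gs) j0 = genval f gs j0" using e True map_id[OF v(2)] by simp
    then show ?thesis using IH by simp
  next
    case False
    show ?thesis
    proof (cases "j0 = l")
      case True
      then have kl: "k < j0" using False v(1) by auto
      have "genval f (g#gs) j0 = genval f gs j0 + f k j0 (- a)"
        using e False True map_neg[OF less_imp_le[OF kl] v(2)] by simp
      then show ?thesis using ImF_add_single[OF IH kl neg_in[OF v(2)]] by simp
    next
      case False2: False
      then have "genval f (g#gs) j0 = genval f gs j0" using e False by simp
      then show ?thesis using IH by simp
    qed
  qed
qed

lemma core1b:
  fixes d :: "'p \<Rightarrow> nat"
  assumes filt: "filtration d" and lat: "\<forall>l. latching_mono S f l"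
  shows "valid S gs UNIV \<longrightarrow> (\<forall>t. j0 < t \<longrightarrow> genval f gs t = 0) \<longrightarrow> genval f gs j0 \<in> ImF S f j0"
proof (rule level_induct[of "\<lambda>gs::('p \<times> 'p \<times> 'm) list. {l \<in> tgts gs. j0 < l}" d], goal_cases)
  case (1 gs)
  note IH = 1(2)
  show ?case
  proof (intro impI)
    assume vg: "valid S gs UNIV" and za: "\<forall>t. j0 < t \<longrightarrow> genval f gs t = 0"
    show "genval f gs j0 \<in> ImF S f j0"
    proof (cases "{l \<in> tgts gs. j0 < l} = {}")
      case True
      have "\<forall>k l a. (k,l,a) \<in> set gs \<longrightarrow> \<not> j0 < l"
      proof (intro allI impI)
        fix k l a assume "(k,l,a) \<in> set gs"
        then have "l \<in> tgts gs" unfolding tgts_def by force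
        then show "\<not> j0 < l" using True by blast
      qed
      then show ?thesis by (rule base1b[OF vg])
    next
      case False
      obtain ls where ls: "ls \<in> {l \<in> tgts gs. j0 < l}" "\<forall>t\<in>{l \<in> tgts gs. j0 < l}. d t \<le> d ls"
        using obtain_max[OF _ False] 1(1) by blast
      let ?P = "\<lambda>g::'p \<times> 'p \<times> 'm. fst (snd g) = ls"
      define gs1 where "gs1 = filter ?P gs"
      define gs2 where "gs2 = filter (\<lambda>g. \<not> ?P g) gs"
      have split: "genval f gs t = genval f gs1 t + genval f gs2 t" for t
        unfolding gs1_def gs2_def by (rule genval_filter)
      have v1: "valid S gs1 UNIV" and v2: "valid S gs2 UNIV"
        unfolding gs1_def gs2_def using vg by (auto intro: valid_filter)
      have ls_idx2: "ls \<notin> idx gs2"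
      proof
        assume "ls \<in> idx gs2"
        then obtain k l a where g: "(k,l,a) \<in> set gs2" "ls = k \<or> ls = l" unfolding idx_def by force
        have lne: "l \<noteq> ls" using g(1) unfolding gs2_def by auto
        have ing: "(k,l,a) \<in> set gs" using g(1) unfolding gs2_def by auto
        then have kl: "k \<le> l" using vg unfolding valid_def by blast
        have "ls = k" using g(2) lne by auto
        then have "ls < l" using kl lne by auto
        moreover have "l \<in> tgts gs" using ing unfolding tgts_def by force
        ultimately have "d l \<le> d ls" using ls by auto
        moreover have "d ls < d l" using \<open>ls < l\<close> filt unfolding filtration_def by blast
        ultimately show False by simp
      qed
      have z2: "genval f gs2 ls = 0" by (rule genval_out[OF ls_idx2])
      have z1: "genval f gs1 ls = 0" using za ls(1) split[of ls] z2 by simp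
      have t1: "\<forall>k l a. (k,l,a) \<in> set gs1 \<longrightarrow> l = ls" unfolding gs1_def by auto
      then have t1': "\<forall>k l a. (k,l,a) \<in> set gs1 \<longrightarrow> l \<le> ls" by auto
      have yd: "genval f gs1 \<in> dsum S {j. j < ls}"
        unfolding dsum_def
      proof (intro CollectI conjI allI impI)
        show "finite {j. genval f gs1 j \<noteq> 0}" by (rule finite_supp_genval)
        show "genval f gs1 j \<in> S j" for j by (rule genval_in[OF v1])
        fix j assume "genval f gs1 j \<noteq> 0"
        then have "j \<in> idx gs1" using genval_out[of j gs1 f] by auto
        then have "j \<le> ls" using idx_le[OF v1 t1'] by blast
        moreover have "j \<noteq> ls" using z1 \<open>genval f gs1 j \<noteq> 0\<close> by auto
        ultimately show "j < ls" by auto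
      qed
      have "phi ls (genval f gs1) = 0" by (rule cocone[OF v1 t1'])
      then have "genval f gs1 \<in> colim_rel S f {j. j < ls}"
        using lat yd unfolding latching_mono_def phi_def by blast
      then obtain gs3 where v3: "valid S gs3 {j. j < ls}" and e3: "genval f gs1 = genval f gs3"
        using rel_genval by blast
      define ns where "ns = gs3 @ gs2"
      have ens: "genval f ns t = genval f gs t" for t
        unfolding ns_def genval_append split e3 by simp
      have vns: "valid S ns UNIV" unfolding ns_def using valid_mono[OF v3] v2 by auto
      have mu: "{l \<in> tgts ns. j0 < l} \<subseteq> ({l \<in> tgts gs. j0 < l} - {ls}) \<union> {t. d t < d ls}"
      proof
        fix l assume "l \<in> {l \<in> tgts ns. j0 < l}"
        then have l: "l \<in> tgts ns" "j0 < l" by auto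
        then obtain k a where g: "(k,l,a) \<in> set ns" unfolding tgts_def by force
        show "l \<in> ({l \<in> tgts gs. j0 < l} - {ls}) \<union> {t. d t < d ls}"
        proof (cases "(k,l,a) \<in> set gs3")
          case True
          then have "l < ls" using v3 unfolding valid_def by blast
          then have "d l < d ls" using filt unfolding filtration_def by blast
          then show ?thesis by blast
        next
          case False
          then have "(k,l,a) \<in> set gs2" using g unfolding ns_def by auto
          then have "(k,l,a) \<in> set gs" "l \<noteq> ls" unfolding gs2_def by auto
          then show ?thesis using l(2) unfolding tgts_def by force
        qed
      qed
      have "valid S ns UNIV \<longrightarrow> (\<forall>t. j0 < t \<longrightarrow> genval f ns t = 0) \<longrightarrow> genval f ns j0 \<in> ImF S f j0"
        by (rule IH[OF _ ls(1) ls(2) mu]) simp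
      then show ?thesis using vns za ens by simp
    qed
  qed
qed simp

end

context gfun begin

lemma latching_imp_pp:
  fixes d :: "'p \<Rightarrow> nat"
  assumes filt: "filtration d" and lat: "\<forall>l. latching_mono S f l"
  shows "pseudo_projective_at S f i"
  unfolding pseudo_projective_at_def
proof (intro allI impI ballI)
  fix J x j0
  assume fJ: "finite J" and Ji: "J \<subseteq> {j. j \<le> i}" and xS: "\<forall>j\<in>J. x j \<in> S j"
    and s0: "(\<Sum>j\<in>J. f j i (x j)) = 0" and jm: "j0 \<in> maxs J"
  have j0J: "j0 \<in> J" and j0m: "\<And>k. k \<in> J \<Longrightarrow> \<not> j0 < k" using jm unfolding maxs_def by auto
  show "x j0 \<in> ImF S f j0"
  proof (cases "i \<in> J")
    case True
    have "j0 \<le> i" using j0J Ji by auto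
    then have j0i: "j0 = i" using j0m[OF True] by auto
    have "(\<Sum>j\<in>J. f j i (x j)) = f i i (x i) + (\<Sum>j\<in>J - {i}. f j i (x j))"
      by (rule sum.remove[OF fJ True])
    then have e: "x i + (\<Sum>j\<in>J - {i}. f j i (x j)) = 0" using s0 map_id xS True by simp
    have "(\<Sum>j\<in>J - {i}. f j i (- x j)) = (\<Sum>j\<in>J - {i}. - f j i (x j))"
    proof (rule sum.cong)
      fix j assume "j \<in> J - {i}"
      then have "j \<le> i" "x j \<in> S j" using Ji xS by auto
      then show "f j i (- x j) = - f j i (x j)" by (rule map_neg)
    qed simp
    also have "\<dots> = - (\<Sum>j\<in>J - {i}. f j i (x j))" by (simp add: sum_negf)
    also have "\<dots> = x i"
    proof -
      have "(\<Sum>j\<in>J - {i}. f j i (x j)) = - x i" using e by (simp add: add_eq_0_iff)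
      then show ?thesis by simp
    qed
    finally have xi: "x i = (\<Sum>j\<in>J - {i}. f j i (- x j))" by simp
    have "x i \<in> ImF S f i" unfolding ImF_def
    proof (intro CollectI exI[of _ "J - {i}"] exI[of _ "\<lambda>j. - x j"] conjI)
      show "finite (J - {i})" using fJ by simp
      show "J - {i} \<subseteq> {k. k < i}" using Ji by auto
      show "\<forall>k\<in>J - {i}. - x k \<in> S k" using xS neg_in by auto
    qed (rule xi)
    then show ?thesis using j0i by simp
  next
    case False
    define y where "y = (\<lambda>t. if t \<in> J then x t else 0)"
    have ys: "{t. y t \<noteq> 0} \<subseteq> J" unfolding y_def by auto
    have Jlt: "J \<subseteq> {j. j < i}" using Ji False by (auto simp: order.order_iff_strict)
    have yd: "y \<in> dsum S {j. j < i}" unfolding dsum_def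
    proof (intro CollectI conjI allI impI)
      show "finite {j. y j \<noteq> 0}" using finite_subset[OF ys fJ] .
      show "y j \<in> S j" for j unfolding y_def using xS by auto
      fix j assume "y j \<noteq> 0" then show "j < i" using ys Jlt by auto
    qed
    have "phi i y = (\<Sum>t\<in>J. f t i (y t))" by (rule phi_U[OF fJ ys Ji])
    also have "\<dots> = (\<Sum>t\<in>J. f t i (x t))" by (rule sum.cong) (auto simp: y_def)
    finally have "phi i y = 0" using s0 by simp
    then have "y \<in> colim_rel S f {j. j < i}" using lat yd unfolding latching_mono_def phi_def by blast
    then obtain gs where vg: "valid S gs {j. j < i}" and yg: "y = genval f gs" using rel_genval by blast
    have "valid S gs UNIV \<longrightarrow> (\<forall>t. j0 < t \<longrightarrow> genval f gs t = 0) \<longrightarrow> genval f gs j0 \<in> ImF S f j0"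
      by (rule core1b[OF filt lat])
    moreover have "valid S gs UNIV" using valid_mono[OF vg] by simp
    moreover have "\<forall>t. j0 < t \<longrightarrow> genval f gs t = 0"
    proof (intro allI impI)
      fix t assume "j0 < t" then have "t \<notin> J" using j0m by blast
      then have "y t = 0" unfolding y_def by simp
      then show "genval f gs t = 0" using yg by simp
    qed
    ultimately have "genval f gs j0 \<in> ImF S f j0" by blast
    moreover have "y j0 = x j0" using j0J unfolding y_def by simp
    then have "genval f gs j0 = x j0" using yg by simp
    ultimately show ?thesis by simp
  qed
qed

lemma latching_iff_pp:
  fixes d :: "'p \<Rightarrow> nat"
  assumes filt: "filtration d"
  shows "(\<forall>i. latching_mono S f i) \<longleftrightarrow> pseudo_projective S f"
  unfolding pseudo_projective_def using latching_imp_pp[OF filt] pp_imp_latching[OF filt] by blast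

end

lemma latching_zero:
  fixes f :: "'p::order \<Rightarrow> 'p \<Rightarrow> 'm::ab_group_add \<Rightarrow> 'm" and i :: 'p
  shows "latching_mono (\<lambda>j. {0::'m}) f i"
  unfolding latching_mono_def
proof (intro ballI impI)
  fix x :: "'p \<Rightarrow> 'm" assume "x \<in> dsum (\<lambda>j. {0}) {j. j < i}"
  then have "x = (\<lambda>_. 0)" unfolding dsum_def by auto
  then show "x \<in> colim_rel (\<lambda>j. {0}) f {j. j < i}" using colim_rel.zero by simp
qed

lemma reedy_iff: "reedy_cofibrant (deg0 S) (deg0_map f) \<longleftrightarrow> (\<forall>i. latching_mono S f i)"
proof -
  have "reedy_cofibrant (deg0 S) (deg0_map f) \<longleftrightarrow>
      (\<forall>i (n::int). latching_mono (\<lambda>j. if n = 0 then S j else {0}) f i)"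
    unfolding reedy_cofibrant_def deg0_def deg0_map_def by simp
  also have "\<dots> \<longleftrightarrow> (\<forall>i. latching_mono S f i)"
  proof
    assume a: "\<forall>i (n::int). latching_mono (\<lambda>j. if n = 0 then S j else {0}) f i"
    show "\<forall>i. latching_mono S f i"
    proof
      fix i
      have "latching_mono (\<lambda>j. if (0::int) = 0 then S j else {0}) f i" using a by blast
      then show "latching_mono S f i" by simp
    qed
  next
    assume a: "\<forall>i. latching_mono S f i"
    show "\<forall>i (n::int). latching_mono (\<lambda>j. if n = 0 then S j else {0}) f i"
    proof (intro allI)
      fix i :: 'a and n :: int
      show "latching_mono (\<lambda>j. if n = 0 then S j else {0}) f i"
        by (cases "n = 0") (simp_all add: a latching_zero)
    qed
  qed
  finally show ?thesis .
qed

lemma pmod_gfun: "pmod s S f \<Longrightarrow> gfun S f"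
proof -
  assume p: "pmod s S f"
  note P = p[unfolded pmod_def]
  have m: "module s" using P by (rule conjunct1)
  have sub: "module.subspace s (S i)" for i using P[THEN conjunct2, THEN conjunct1] by (rule spec)
  have lin: "lin_on s s (S i) (f i j) \<and> f i j ` S i \<subseteq> S j" if "i \<le> j" for i j
    using P[THEN conjunct2, THEN conjunct2, THEN conjunct1] that by blast
  have idm: "\<forall>x\<in>S i. f i i x = x" for i
    using P[THEN conjunct2, THEN conjunct2, THEN conjunct2, THEN conjunct1] by (rule spec)
  have cmp: "\<forall>x\<in>S i. f j k (f i j x) = f i k x" if "i \<le> j" "j \<le> k" for i j k
    using P[THEN conjunct2, THEN conjunct2, THEN conjunct2, THEN conjunct2] that by blast
  show "gfun S f"
  proof (rule gfun.intro)
    show "0 \<in> S i" for i using module.subspace_0[OF m sub] .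
    show "x + y \<in> S i" if "x \<in> S i" "y \<in> S i" for x y i using module.subspace_add[OF m sub that] .
    show "- x \<in> S i" if "x \<in> S i" for x i using module.subspace_neg[OF m sub that] .
    show "f i j x \<in> S j" if "i \<le> j" "x \<in> S i" for i j x
    proof -
      have "f i j ` S i \<subseteq> S j" using lin[OF that(1)] by (rule conjunct2)
      then show ?thesis using that(2) by (rule subsetD[OF _ imageI])
    qed
    show "f i j (x + y) = f i j x + f i j y" if "i \<le> j" "x \<in> S i" "y \<in> S i" for i j x y
    proof -
      have "lin_on s s (S i) (f i j)" using lin[OF that(1)] by (rule conjunct1)
      then have "\<forall>x\<in>S i. \<forall>y\<in>S i. f i j (x + y) = f i j x + f i j y" unfolding lin_on_def by (rule conjunct1)
      then show ?thesis using that(2,3) by blast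
    qed
    show "f i i x = x" if "x \<in> S i" for x i using idm that by blast
    show "f j k (f i j x) = f i k x" if "i \<le> j" "j \<le> k" "x \<in> S i" for i j k x
      using cmp[OF that(1,2)] that(3) by blast
  qed
qed

definition pgen :: "('p \<Rightarrow> 'q \<Rightarrow> 'b) \<Rightarrow> ('p \<times> 'p \<times> 'q) \<Rightarrow> ('p \<times> 'p \<times> 'b)" where
  "pgen \<pi> g = (case g of (k,l,a) \<Rightarrow> (k, l, \<pi> k a))"

lemma pgen_simp[simp]: "pgen \<pi> (k,l,a) = (k, l, \<pi> k a)" by (simp add: pgen_def)

lemma tgts_map_pgen[simp]: "tgts (map (pgen \<pi>) gs) = tgts gs"
  unfolding tgts_def by (force simp: pgen_def split: prod.splits)

lemma idx_map_pgen[simp]: "idx (map (pgen \<pi>) gs) = idx gs"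
  unfolding idx_def by (force simp: pgen_def split: prod.splits)

context gfun begin
lemma tgts_negl: "tgts (negl gs) = tgts gs"
  unfolding tgts_def negl_def by (force split: prod.splits)
lemma idx_negl: "idx (negl gs) = idx gs"
  unfolding idx_def negl_def by (force split: prod.splits)
end

locale sext = Q: gfun Q q + F: gfun F g
  for Q :: "'p::order \<Rightarrow> 'q::ab_group_add set" and q
  and F :: "'p \<Rightarrow> 'b::ab_group_add set" and g +
  fixes \<pi> :: "'p \<Rightarrow> 'q \<Rightarrow> 'b"
  assumes pi_in: "x \<in> Q i \<Longrightarrow> \<pi> i x \<in> F i"
    and pi_add: "x \<in> Q i \<Longrightarrow> y \<in> Q i \<Longrightarrow> \<pi> i (x + y) = \<pi> i x + \<pi> i y"
    and pi_nat: "i \<le> j \<Longrightarrow> x \<in> Q i \<Longrightarrow> \<pi> j (q i j x) = g i j (\<pi> i x)"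
    and pi_surj: "c \<in> F i \<Longrightarrow> \<exists>x\<in>Q i. \<pi> i x = c"
begin

definition ker :: "'p \<Rightarrow> 'q set" where "ker i = {x \<in> Q i. \<pi> i x = 0}"

lemma pi_zero: "\<pi> i 0 = 0"
proof -
  have e: "\<pi> i (0 + 0) = \<pi> i 0 + \<pi> i 0" by (rule pi_add) simp_all
  show ?thesis using e by (metis add.right_neutral add_left_cancel)
qed

lemma pi_neg: "x \<in> Q i \<Longrightarrow> \<pi> i (- x) = - \<pi> i x"
proof -
  assume a: "x \<in> Q i"
  then have e: "\<pi> i (x + - x) = \<pi> i x + \<pi> i (- x)" by (intro pi_add Q.neg_in)
  then have "\<pi> i x + \<pi> i (- x) = 0" using pi_zero by (metis add.right_inverse)
  then show ?thesis by (metis neg_eq_iff_add_eq_0)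
qed

lemma pi_diff: "x \<in> Q i \<Longrightarrow> y \<in> Q i \<Longrightarrow> \<pi> i (x - y) = \<pi> i x - \<pi> i y"
proof -
  assume a: "x \<in> Q i" "y \<in> Q i"
  have "\<pi> i (x - y) = \<pi> i (x + -y)" by simp
  also have "\<dots> = \<pi> i x + \<pi> i (-y)" using a by (intro pi_add Q.neg_in)
  also have "\<dots> = \<pi> i x - \<pi> i y" using pi_neg a by simp
  finally show ?thesis .
qed

lemma ker_gfun: "gfun ker q"
proof (rule gfun.intro)
  show "0 \<in> ker i" for i unfolding ker_def using pi_zero by simp
  show "x + y \<in> ker i" if "x \<in> ker i" "y \<in> ker i" for x y i
    using that unfolding ker_def by (simp add: Q.add_in pi_add)
  show "- x \<in> ker i" if "x \<in> ker i" for x i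
    using that unfolding ker_def by (simp add: Q.neg_in pi_neg)
  show "q i j x \<in> ker j" if "i \<le> j" "x \<in> ker i" for i j x
    using that unfolding ker_def by (simp add: Q.map_in pi_nat F.map_zero)
  show "q i j (x + y) = q i j x + q i j y" if "i \<le> j" "x \<in> ker i" "y \<in> ker i" for i j x y
    using that unfolding ker_def by (simp add: Q.map_add)
  show "q i i x = x" if "x \<in> ker i" for x i
    using that unfolding ker_def by (simp add: Q.map_id)
  show "q j k (q i j x) = q i k x" if "i \<le> j" "j \<le> k" "x \<in> ker i" for i j k x
    using that unfolding ker_def by (simp add: Q.map_comp)
qed

lemma ker_sub: "x \<in> ker i \<Longrightarrow> x \<in> Q i" unfolding ker_def by simp

lemma valid_pgen: "valid Q gs A \<Longrightarrow> valid F (map (pgen \<pi>) gs) A"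
proof (induction gs)
  case (Cons h gs)
  obtain k l a where h: "h = (k,l,a)" by (cases h)
  show ?case using Cons unfolding h by (simp add: pi_in)
qed simp

lemma genval_pgen: "valid Q gs A \<Longrightarrow> \<pi> t (genval q gs t) = genval g (map (pgen \<pi>) gs) t"
proof (induction gs)
  case Nil then show ?case using pi_zero by simp
next
  case (Cons h gs)
  obtain k l a where h: "h = (k,l,a)" by (cases h)
  have v: "k \<le> l" "a \<in> Q k" "valid Q gs A" using Cons(2) unfolding h by auto
  have i1: "(if t = k then a else 0) \<in> Q t" using v by auto
  have i2: "(if t = l then q k l a else 0) \<in> Q t" using v Q.map_in by auto
  have i3: "genval q gs t \<in> Q t" by (rule Q.genval_in[OF v(3)])
  have "\<pi> t (genval q (h#gs) t) = \<pi> t ((if t = k then a else 0) - (if t = l then q k l a else 0) + genval q gs t)"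
    unfolding h by simp
  also have "\<dots> = \<pi> t ((if t = k then a else 0) - (if t = l then q k l a else 0)) + \<pi> t (genval q gs t)"
    by (rule pi_add[OF Q.diff_in[OF i1 i2] i3])
  also have "\<dots> = \<pi> t (if t = k then a else 0) - \<pi> t (if t = l then q k l a else 0) + \<pi> t (genval q gs t)"
    by (simp only: pi_diff[OF i1 i2])
  also have "\<pi> t (if t = k then a else 0) = (if t = k then \<pi> k a else 0)" using pi_zero by simp
  also have "\<pi> t (if t = l then q k l a else 0) = (if t = l then g k l (\<pi> k a) else 0)"
    using pi_zero pi_nat[OF v(1,2)] by simp
  also have "\<pi> t (genval q gs t) = genval g (map (pgen \<pi>) gs) t" by (rule Cons(1)[OF v(3)])
  finally show ?case unfolding h by simp
qed

lemma lift_gens: "valid F hs A \<Longrightarrow> \<exists>hs'. valid Q hs' A \<and> map (pgen \<pi>) hs' = hs"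
proof (induction hs)
  case Nil then show ?case by simp
next
  case (Cons h hs)
  obtain k l c where h: "h = (k,l,c)" by (cases h)
  have v: "k \<in> A" "l \<in> A" "k \<le> l" "c \<in> F k" "valid F hs A" using Cons(2) unfolding h by auto
  obtain hs' where hs': "valid Q hs' A" "map (pgen \<pi>) hs' = hs" using Cons(1)[OF v(5)] by blast
  obtain b where b: "b \<in> Q k" "\<pi> k b = c" using pi_surj[OF v(4)] by blast
  show ?case using hs' b v unfolding h by (intro exI[of _ "(k,l,b)#hs'"]) simp
qed

end

context gfun begin
lemma mem_negl: "(k,l,a) \<in> set (negl gs) \<Longrightarrow> (k,l,-a) \<in> set gs"
  unfolding negl_def by auto
end

context sext begin

lemma coreE:
  fixes d :: "'p \<Rightarrow> nat"
  assumes filt: "filtration d" and dc: "\<forall>y\<in>D. \<forall>u. u \<le> y \<longrightarrow> u \<in> D"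
    and lat: "\<forall>l\<in>D. latching_mono F g l"
  shows "valid Q gs D \<longrightarrow> (\<forall>t. genval q gs t \<in> ker t) \<longrightarrow> genval q gs \<in> colim_rel ker q D"
proof (rule level_induct[of "\<lambda>gs::('p \<times> 'p \<times> 'q) list. tgts gs" d], goal_cases)
  case (1 gs)
  note IH = 1(2)
  interpret K: gfun ker q by (rule ker_gfun)
  show ?case
  proof (intro impI)
    assume vg: "valid Q gs D" and gk: "\<forall>t. genval q gs t \<in> ker t"
    show "genval q gs \<in> colim_rel ker q D"
    proof (cases "tgts gs = {}")
      case True
      then have "gs = []" unfolding tgts_def by simp
      then have "genval q gs = (\<lambda>_. 0)" by (simp add: fun_eq_iff)
      then show ?thesis using colim_rel.zero by simp
    next
      case False
      obtain ls where ls: "ls \<in> tgts gs" "\<forall>t\<in>tgts gs. d t \<le> d ls"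
        using obtain_max[OF 1(1) False] by blast
      obtain k0 a0 where "(k0, ls, a0) \<in> set gs" using ls(1) unfolding tgts_def by force
      then have lsD: "ls \<in> D" using vg unfolding valid_def by blast
      let ?P = "\<lambda>h::'p \<times> 'p \<times> 'q. fst (snd h) = ls"
      define gs1 where "gs1 = filter ?P gs"
      define gs2 where "gs2 = filter (\<lambda>h. \<not> ?P h) gs"
      have split: "genval q gs t = genval q gs1 t + genval q gs2 t" for t
        unfolding gs1_def gs2_def by (rule genval_filter)
      have v1: "valid Q gs1 D" and v2: "valid Q gs2 D"
        unfolding gs1_def gs2_def using vg by (auto intro: valid_filter)
      have ls_idx2: "ls \<notin> idx gs2"
      proof
        assume "ls \<in> idx gs2"
        then obtain k l a where h: "(k,l,a) \<in> set gs2" "ls = k \<or> ls = l" unfolding idx_def by force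
        have lne: "l \<noteq> ls" using h(1) unfolding gs2_def by auto
        have ing: "(k,l,a) \<in> set gs" using h(1) unfolding gs2_def by auto
        then have kl: "k \<le> l" using vg unfolding valid_def by blast
        have "ls = k" using h(2) lne by auto
        then have "ls < l" using kl lne by auto
        moreover have "l \<in> tgts gs" using ing unfolding tgts_def by force
        ultimately have "d l \<le> d ls" using ls by auto
        moreover have "d ls < d l" using \<open>ls < l\<close> filt unfolding filtration_def by blast
        ultimately show False by simp
      qed
      have z2: "genval q gs2 ls = 0" by (rule genval_out[OF ls_idx2])
      have t1: "\<forall>k l a. (k,l,a) \<in> set gs1 \<longrightarrow> l \<le> ls" unfolding gs1_def by auto
      define y where "y = genval g (map (pgen \<pi>) gs1)"
      have vy: "valid F (map (pgen \<pi>) gs1) D" by (rule valid_pgen[OF v1])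
      have yt: "y t = \<pi> t (genval q gs1 t)" for t unfolding y_def by (rule genval_pgen[OF v1, symmetric])
      have yls: "y ls = 0"
      proof -
        have "genval q gs1 ls = genval q gs ls" using split[of ls] z2 by simp
        then show ?thesis using yt[of ls] gk unfolding ker_def by simp
      qed
      have t1y: "\<forall>k l a. (k,l,a) \<in> set (map (pgen \<pi>) gs1) \<longrightarrow> l \<le> ls"
      proof (intro allI impI)
        fix k l a assume "(k,l,a) \<in> set (map (pgen \<pi>) gs1)"
        then obtain a' where "(k,l,a') \<in> set gs1" by (auto simp: pgen_def split: prod.splits)
        then show "l \<le> ls" using t1 by blast
      qed
      have yd: "y \<in> dsum F {j. j < ls}"
        unfolding dsum_def
      proof (intro CollectI conjI allI impI)
        show "finite {j. y j \<noteq> 0}" unfolding y_def by (rule finite_supp_genval)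
        show "y j \<in> F j" for j unfolding y_def by (rule F.genval_in[OF vy])
        fix j assume nz: "y j \<noteq> 0"
        then have "j \<in> idx (map (pgen \<pi>) gs1)" using genval_out[of j "map (pgen \<pi>) gs1" g] unfolding y_def by auto
        then have "j \<le> ls" using F.idx_le[OF vy t1y] by blast
        moreover have "j \<noteq> ls" using yls nz by auto
        ultimately show "j < ls" by auto
      qed
      have "F.phi ls y = 0" unfolding y_def by (rule F.cocone[OF vy t1y])
      then have "y \<in> colim_rel F g {j. j < ls}" using lat lsD yd unfolding latching_mono_def F.phi_def by blast
      then obtain hs where vh: "valid F hs {j. j < ls}" and yh: "y = genval g hs"
        using F.rel_genval by blast
      obtain hs' where vh': "valid Q hs' {j. j < ls}" and mh: "map (pgen \<pi>) hs' = hs"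
        using lift_gens[OF vh] by blast
      have ph: "\<pi> t (genval q hs' t) = genval g hs t" for t using genval_pgen[OF vh', of t] mh by simp
      have ltD: "{j. j < ls} \<subseteq> D" using dc lsD by (auto dest: less_imp_le)
      have vh'D: "valid Q hs' D" by (rule valid_mono[OF vh' ltD])
      define z where "z = (\<lambda>t. genval q gs1 t - genval q hs' t)"
      define ws where "ws = gs1 @ Q.negl hs'"
      have vws: "valid Q ws D" unfolding ws_def using v1 Q.valid_negl[OF vh'D] by simp
      have zws: "z = genval q ws"
        unfolding z_def ws_def by (simp add: fun_eq_iff genval_append Q.genval_negl[OF vh'D])
      have tws: "\<forall>k l a. (k,l,a) \<in> set ws \<longrightarrow> l \<le> ls"
      proof (intro allI impI)
        fix k l a assume "(k,l,a) \<in> set ws"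
        then have "(k,l,a) \<in> set gs1 \<or> (k,l,-a) \<in> set hs'" unfolding ws_def using Q.mem_negl by auto
        then show "l \<le> ls" using t1 vh' unfolding valid_def by (auto intro: less_imp_le)
      qed
      have zK: "z t \<in> ker t" for t
      proof -
        have i1: "genval q gs1 t \<in> Q t" by (rule Q.genval_in[OF v1])
        have i2: "genval q hs' t \<in> Q t" by (rule Q.genval_in[OF vh'])
        have "\<pi> t (z t) = \<pi> t (genval q gs1 t) - \<pi> t (genval q hs' t)"
          unfolding z_def by (rule pi_diff[OF i1 i2])
        also have "\<dots> = y t - y t" using yt ph yh by simp
        finally show ?thesis unfolding ker_def z_def using Q.diff_in[OF i1 i2] by simp
      qed
      have zsupp: "{t. z t \<noteq> 0} \<subseteq> {t. t \<le> ls}"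
        unfolding zws by (rule subset_trans[OF supp_genval Q.idx_le[OF vws tws]])
      have fz: "finite {t. z t \<noteq> 0}" unfolding zws by (rule finite_supp_genval)
      define T where "T = {t. z t \<noteq> 0} - {ls}"
      have fT: "finite T" unfolding T_def using fz by simp
      obtain ts where ts: "set ts = T" "distinct ts" using finite_distinct_list[OF fT] by blast
      define zs where "zs = map (\<lambda>t. (t, ls, z t)) ts"
      have gz: "genval q zs t = (if t \<in> T then z t else 0) - (if t = ls then (\<Sum>k\<in>T. q k ls (z k)) else 0)" for t
        unfolding zs_def using genval_star[OF ts(2), of q ls z t] ts(1) by simp
      have phz: "Q.phi ls z = 0" unfolding zws by (rule Q.cocone[OF vws tws])
      have lsT: "ls \<notin> T" unfolding T_def by simp
      have "Q.phi ls z = (\<Sum>t\<in>insert ls T. q t ls (z t))"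
        by (rule Q.phi_U) (use fT zsupp in \<open>auto simp: T_def\<close>)
      also have "\<dots> = q ls ls (z ls) + (\<Sum>t\<in>T. q t ls (z t))" by (rule sum.insert[OF fT lsT])
      also have "q ls ls (z ls) = z ls" by (rule Q.map_id[OF ker_sub[OF zK]])
      finally have sumT: "z ls + (\<Sum>t\<in>T. q t ls (z t)) = 0" using phz by simp
      have zeq: "genval q zs = z"
      proof
        fix t show "genval q zs t = z t"
        proof (cases "t = ls")
          case True
          have "(\<Sum>t\<in>T. q t ls (z t)) = - z ls" using sumT by (simp add: add_eq_0_iff)
          then show ?thesis using True lsT gz[of t] by simp
        next
          case False
          show ?thesis
          proof (cases "t \<in> T")
            case True then show ?thesis using gz[of t] False by simp
          next
            case nT: False
            then have "z t = 0" using False unfolding T_def by simp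
            then show ?thesis using gz[of t] False nT by simp
          qed
        qed
      qed
      have vzs: "valid ker zs D" unfolding valid_def
      proof (intro allI impI)
        fix k l a assume "(k,l,a) \<in> set zs"
        then have h: "k \<in> T" "l = ls" "a = z k" unfolding zs_def using ts(1) by auto
        have "k \<le> ls" "k \<noteq> ls" using h(1) zsupp unfolding T_def by auto
        then have "k < ls" by auto
        then have "k \<in> D" using ltD by auto
        then show "k \<in> D \<and> l \<in> D \<and> k \<le> l \<and> a \<in> ker k" using h lsD \<open>k < ls\<close> zK by auto
      qed
      have zrel: "z \<in> colim_rel ker q D" using K.genval_rel[OF vzs] zeq by simp
      define ns where "ns = hs' @ gs2"
      have vns: "valid Q ns D" unfolding ns_def using vh'D v2 by simp
      have ens: "genval q gs t = z t + genval q ns t" for t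
        unfolding ns_def genval_append z_def using split[of t] by simp
      have nsK: "genval q ns t \<in> ker t" for t
      proof -
        have "genval q ns t = genval q gs t - z t" using ens[of t] by simp
        then show ?thesis using K.diff_in[OF gk[rule_format] zK] by simp
      qed
      have mu: "tgts ns \<subseteq> (tgts gs - {ls}) \<union> {t. d t < d ls}"
      proof
        fix l assume "l \<in> tgts ns"
        then obtain k a where h: "(k,l,a) \<in> set ns" unfolding tgts_def by force
        show "l \<in> (tgts gs - {ls}) \<union> {t. d t < d ls}"
        proof (cases "(k,l,a) \<in> set hs'")
          case True
          then have "l < ls" using vh' unfolding valid_def by blast
          then have "d l < d ls" using filt unfolding filtration_def by blast
          then show ?thesis by blast
        next
          case False
          then have "(k,l,a) \<in> set gs2" using h unfolding ns_def by auto
          then have "(k,l,a) \<in> set gs" "l \<noteq> ls" unfolding gs2_def by auto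
          then show ?thesis unfolding tgts_def by force
        qed
      qed
      have "valid Q ns D \<longrightarrow> (\<forall>t. genval q ns t \<in> ker t) \<longrightarrow> genval q ns \<in> colim_rel ker q D"
        by (rule IH[OF _ ls(1) ls(2) mu]) simp
      then have nrel: "genval q ns \<in> colim_rel ker q D" using vns nsK by blast
      have "(\<lambda>t. z t + genval q ns t) \<in> colim_rel ker q D" by (rule K.rel_add[OF zrel nrel])
      moreover have "(\<lambda>t. z t + genval q ns t) = genval q gs" using ens by (simp add: fun_eq_iff)
      ultimately show ?thesis by simp
    qed
  qed
qed simp

lemma relK:
  fixes d :: "'p \<Rightarrow> nat"
  assumes filt: "filtration d" and dc: "\<forall>y\<in>D. \<forall>u. u \<le> y \<longrightarrow> u \<in> D"
    and lat: "\<forall>l\<in>D. latching_mono F g l"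
    and x: "x \<in> colim_rel Q q D" and xk: "\<forall>t. x t \<in> ker t"
  shows "x \<in> colim_rel ker q D"
proof -
  obtain gs where "valid Q gs D" "x = genval q gs" using Q.rel_genval[OF x] by blast
  then show ?thesis using coreE[OF filt dc lat] xk by blast
qed

lemma ker_latching:
  fixes d :: "'p \<Rightarrow> nat"
  assumes filt: "filtration d" and latQ: "\<forall>l. latching_mono Q q l" and latF: "\<forall>l. latching_mono F g l"
  shows "latching_mono ker q i"
  unfolding latching_mono_def
proof (intro ballI impI)
  fix x assume xd: "x \<in> dsum ker {j. j < i}" and s: "(\<Sum>j\<in>{j. x j \<noteq> 0}. q j i (x j)) = 0"
  have xk: "\<forall>t. x t \<in> ker t" using xd unfolding dsum_def by blast
  have "x \<in> dsum Q {j. j < i}" using xd ker_sub unfolding dsum_def by blast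
  then have "x \<in> colim_rel Q q {j. j < i}" using latQ s unfolding latching_mono_def by blast
  moreover have "\<forall>b\<in>{j. j < i}. \<forall>a. a \<le> b \<longrightarrow> a \<in> {j. j < i}" by (auto intro: le_less_trans)
  moreover have "\<forall>l\<in>{j. j < i}. latching_mono F g l" using latF by blast
  ultimately show "x \<in> colim_rel ker q {j. j < i}"
    using relK[OF filt _ _ _ xk] by blast
qed

end

context gfun begin

lemma rel_gen:
  assumes "k \<in> B" "l \<in> B" "k \<le> l" "a \<in> S k"
  shows "(\<lambda>u. (if u = k then a else 0) - (if u = l then f k l a else 0)) \<in> colim_rel S f B"
proof -
  have "genval f [(k,l,a)] \<in> colim_rel S f B" by (rule genval_rel) (use assms in simp)
  moreover have "genval f [(k,l,a)] = (\<lambda>u. (if u = k then a else 0) - (if u = l then f k l a else 0))"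
    by (simp add: fun_eq_iff)
  ultimately show ?thesis by simp
qed

lemma rel_sum:
  assumes "finite A" "\<And>a. a \<in> A \<Longrightarrow> h a \<in> colim_rel S f B"
  shows "(\<lambda>u. \<Sum>a\<in>A. h a u) \<in> colim_rel S f B"
  using assms
proof (induction A rule: finite_induct)
  case empty then show ?case using colim_rel.zero by simp
next
  case (insert a A)
  have r1: "h a \<in> colim_rel S f B" using insert by simp
  have r2: "(\<lambda>u. \<Sum>a\<in>A. h a u) \<in> colim_rel S f B" using insert by simp
  have "(\<lambda>u. h a u + (\<lambda>u. \<Sum>a\<in>A. h a u) u) \<in> colim_rel S f B" by (rule rel_add[OF r1 r2])
  then show ?case using insert(1,2) by simp
qed

end

lemma free_latching:
  fixes s :: "'r::comm_ring_1 \<Rightarrow> 'q::ab_group_add \<Rightarrow> 'q" and Q :: "'p::order \<Rightarrow> 'q set"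
    and q :: "'p \<Rightarrow> 'p \<Rightarrow> 'q \<Rightarrow> 'q"
  assumes fr: "free_pmod s Q q"
  shows "latching_mono Q q i"
proof -
  have pm: "pmod s Q q" using fr unfolding free_pmod_def by (rule conjunct1)
  note P = pm[unfolded pmod_def]
  interpret M: module s using P by (rule conjunct1)
  interpret G: gfun Q q by (rule pmod_gfun[OF pm])
  have sub: "M.subspace (Q t)" for t using P[THEN conjunct2, THEN conjunct1] by (rule spec)
  have scl: "q a b (s c y) = s c (q a b y)" if "a \<le> b" "y \<in> Q a" for a b c y
  proof -
    have "lin_on s s (Q a) (q a b)" using P[THEN conjunct2, THEN conjunct2, THEN conjunct1] that(1) by blast
    then have "\<forall>c. \<forall>x\<in>Q a. q a b (s c x) = s c (q a b x)" unfolding lin_on_def by (rule conjunct2)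
    then show ?thesis using that(2) by blast
  qed
  obtain X where X: "\<forall>i. X i \<subseteq> Q i" and bas: "\<forall>j.
      inj_on (\<lambda>(i, x). q i j x) {(i, x). i \<le> j \<and> x \<in> X i} \<and>
      \<not> M.dependent ((\<lambda>(i, x). q i j x) ` {(i, x). i \<le> j \<and> x \<in> X i}) \<and>
      M.span ((\<lambda>(i, x). q i j x) ` {(i, x). i \<le> j \<and> x \<in> X i}) = Q j"
    using fr unfolding free_pmod_def by blast
  define B where "B t = {(i, x). i \<le> t \<and> x \<in> X i}" for t
  define \<beta> where "\<beta> t p = q (fst p) t (snd p)" for t p
  have beq: "(\<lambda>(i, x). q i t x) = \<beta> t" for t by (simp add: fun_eq_iff \<beta>_def split_beta)
  have inj: "inj_on (\<beta> t) (B t)" for t using bas unfolding beq B_def by blast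
  have indep: "\<not> M.dependent (\<beta> t ` B t)" for t using bas unfolding beq B_def by blast
  have span: "M.span (\<beta> t ` B t) = Q t" for t using bas unfolding beq B_def by blast
  have Bmem: "fst p \<le> t" "snd p \<in> Q (fst p)" if "p \<in> B t" for p t
    using that X unfolding B_def by (auto simp: subset_iff)
  have \<beta>Q: "\<beta> t p \<in> Q t" if "p \<in> B t" for p t
    unfolding \<beta>_def using G.map_in[OF Bmem[OF that]] .
  show ?thesis unfolding latching_mono_def
  proof (intro ballI impI)
    fix x assume xd: "x \<in> dsum Q {j. j < i}" and s0: "(\<Sum>j\<in>{j. x j \<noteq> 0}. q j i (x j)) = 0"
    define T where "T = {j. x j \<noteq> 0}"
    have fT: "finite T" and Ti: "\<And>t. t \<in> T \<Longrightarrow> t < i" and xQ: "\<And>t. x t \<in> Q t"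
      using xd unfolding dsum_def T_def by auto
    have rep: "\<forall>t\<in>T. \<exists>I c. finite I \<and> I \<subseteq> B t \<and> x t = (\<Sum>p\<in>I. s (c p) (\<beta> t p))"
    proof
      fix t assume "t \<in> T"
      have "x t \<in> M.span (\<beta> t ` B t)" using span xQ by simp
      then have "\<exists>V r. x t = (\<Sum>v\<in>V. s (r v) v) \<and> finite V \<and> V \<subseteq> \<beta> t ` B t"
        unfolding M.span_explicit by (simp only: mem_Collect_eq)
      then obtain V r where V0: "x t = (\<Sum>v\<in>V. s (r v) v)" "finite V" "V \<subseteq> \<beta> t ` B t"
        by (elim exE conjE)
      note V = V0(2) V0(3) V0(1)
      define I where "I = {p \<in> B t. \<beta> t p \<in> V}"
      have iI: "inj_on (\<beta> t) I" by (rule inj_on_subset[OF inj]) (auto simp: I_def)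
      have imI: "\<beta> t ` I = V" using V(2) unfolding I_def by auto
      have fI: "finite I" using finite_imageD[of "\<beta> t" I] imI V(1) iI by simp
      have "x t = (\<Sum>p\<in>I. s (r (\<beta> t p)) (\<beta> t p))"
        using V(3) sum.reindex[OF iI, of "\<lambda>v. s (r v) v"] imI by simp
      moreover have "I \<subseteq> B t" unfolding I_def by blast
      ultimately show "\<exists>I c. finite I \<and> I \<subseteq> B t \<and> x t = (\<Sum>p\<in>I. s (c p) (\<beta> t p))"
        using fI by (intro exI[of _ I] exI[of _ "\<lambda>p. r (\<beta> t p)"] conjI)
    qed
    obtain I where I1: "\<forall>t\<in>T. \<exists>c. finite (I t) \<and> I t \<subseteq> B t \<and> x t = (\<Sum>p\<in>I t. s (c p) (\<beta> t p))"
      using bchoice[OF rep] by blast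
    obtain c where Ic: "\<forall>t\<in>T. finite (I t) \<and> I t \<subseteq> B t \<and> x t = (\<Sum>p\<in>I t. s (c t p) (\<beta> t p))"
      using bchoice[OF I1] by blast
    have fI: "\<And>t. t \<in> T \<Longrightarrow> finite (I t)" and IB: "\<And>t. t \<in> T \<Longrightarrow> I t \<subseteq> B t"
      and xs: "\<And>t. t \<in> T \<Longrightarrow> x t = (\<Sum>p\<in>I t. s (c t p) (\<beta> t p))" using Ic by auto
    define IU where "IU = (\<Union>t\<in>T. I t)"
    have fIU: "finite IU" unfolding IU_def using fT fI by blast
    have IUB: "IU \<subseteq> B i"
    proof
      fix p assume "p \<in> IU"
      then obtain t where t: "t \<in> T" "p \<in> I t" unfolding IU_def by blast
      then have "p \<in> B t" using IB by blast
      then show "p \<in> B i" using Ti[OF t(1)] unfolding B_def by auto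
    qed
    have e1: "q t i (x t) = (\<Sum>p\<in>I t. s (c t p) (\<beta> i p))" if "t \<in> T" for t
    proof -
      have ti: "t \<le> i" using Ti[OF that] by simp
      have "q t i (x t) = (\<Sum>p\<in>I t. q t i (s (c t p) (\<beta> t p)))"
        unfolding xs[OF that]
        by (rule G.map_sum[OF ti]) (use IB[OF that] \<beta>Q M.subspace_scale[OF sub] in blast)
      also have "\<dots> = (\<Sum>p\<in>I t. s (c t p) (\<beta> i p))"
      proof (rule sum.cong)
        fix p assume pI: "p \<in> I t"
        then have pB: "p \<in> B t" using IB[OF that] by blast
        have "q t i (s (c t p) (\<beta> t p)) = s (c t p) (q t i (\<beta> t p))" by (rule scl[OF ti \<beta>Q[OF pB]])
        also have "q t i (\<beta> t p) = \<beta> i p"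
          unfolding \<beta>_def by (rule G.map_comp[OF Bmem(1)[OF pB] ti Bmem(2)[OF pB]])
        finally show "q t i (s (c t p) (\<beta> t p)) = s (c t p) (\<beta> i p)" .
      qed simp
      finally show ?thesis .
    qed
    define C where "C p = (\<Sum>t\<in>{t \<in> T. p \<in> I t}. c t p)" for p
    have swap: "(\<Sum>t\<in>T. \<Sum>p\<in>I t. h t p) = (\<Sum>p\<in>IU. \<Sum>t\<in>{t \<in> T. p \<in> I t}. h t p)" for h :: "'p \<Rightarrow> 'p \<times> 'q \<Rightarrow> 'z::comm_monoid_add"
    proof -
      have "(\<Sum>t\<in>T. \<Sum>p\<in>I t. h t p) = (\<Sum>t\<in>T. \<Sum>p\<in>{p \<in> IU. p \<in> I t}. h t p)"
      proof (rule sum.cong)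
        fix t assume "t \<in> T"
        then have "{p \<in> IU. p \<in> I t} = I t" unfolding IU_def by blast
        then show "(\<Sum>p\<in>I t. h t p) = (\<Sum>p\<in>{p \<in> IU. p \<in> I t}. h t p)" by simp
      qed simp
      also have "\<dots> = (\<Sum>p\<in>IU. \<Sum>t\<in>{t \<in> T. p \<in> I t}. h t p)"
        by (rule sum.swap_restrict[OF fT fIU])
      finally show ?thesis .
    qed
    have "0 = (\<Sum>t\<in>T. q t i (x t))" using s0 unfolding T_def by simp
    also have "\<dots> = (\<Sum>t\<in>T. \<Sum>p\<in>I t. s (c t p) (\<beta> i p))" by (rule sum.cong) (simp_all add: e1)
    also have "\<dots> = (\<Sum>p\<in>IU. \<Sum>t\<in>{t \<in> T. p \<in> I t}. s (c t p) (\<beta> i p))" by (rule swap)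
    also have "\<dots> = (\<Sum>p\<in>IU. s (C p) (\<beta> i p))" unfolding C_def by (simp add: M.scale_sum_left)
    finally have z: "(\<Sum>p\<in>IU. s (C p) (\<beta> i p)) = 0" by simp
    have C0: "C p = 0" if "p \<in> IU" for p
    proof -
      have iIU: "inj_on (\<beta> i) IU" using inj_on_subset[OF inj IUB] .
      define u where "u w = C (the_inv_into IU (\<beta> i) w)" for w
      have "(\<Sum>w\<in>\<beta> i ` IU. s (u w) w) = (\<Sum>p\<in>IU. s (u (\<beta> i p)) (\<beta> i p))"
        using sum.reindex[OF iIU, of "\<lambda>w. s (u w) w"] by (simp add: o_def)
      also have "\<dots> = (\<Sum>p\<in>IU. s (C p) (\<beta> i p))"
        by (rule sum.cong) (simp_all add: u_def the_inv_into_f_f[OF iIU])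
      finally have "(\<Sum>w\<in>\<beta> i ` IU. s (u w) w) = 0" using z by simp
      then have "u (\<beta> i p) = 0"
        using M.independentD[OF indep[of i] finite_imageI[OF fIU] image_mono[OF IUB]] that by blast
      then show ?thesis unfolding u_def using the_inv_into_f_f[OF iIU that] by simp
    qed
    define \<gamma> where "\<gamma> t p = (\<lambda>u. (if u = fst p then s (c t p) (snd p) else 0)
        - (if u = t then q (fst p) t (s (c t p) (snd p)) else 0))" for t p
    define Gs where "Gs = (\<lambda>u. \<Sum>t\<in>T. (\<lambda>t u. \<Sum>p\<in>I t. \<gamma> t p u) t u)"
    have Grel: "Gs \<in> colim_rel Q q {j. j < i}"
      unfolding Gs_def
    proof (rule G.rel_sum[OF fT])
      fix t assume tT: "t \<in> T"
      show "(\<lambda>u. \<Sum>p\<in>I t. \<gamma> t p u) \<in> colim_rel Q q {j. j < i}"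
      proof (rule G.rel_sum[OF fI[OF tT]])
        fix p assume "p \<in> I t"
        then have pB: "p \<in> B t" using IB[OF tT] by blast
        show "\<gamma> t p \<in> colim_rel Q q {j. j < i}"
          unfolding \<gamma>_def
        proof (rule G.rel_gen)
          show "fst p \<in> {j. j < i}" using Bmem(1)[OF pB] Ti[OF tT] by (auto intro: le_less_trans)
          show "t \<in> {j. j < i}" using Ti[OF tT] by simp
          show "fst p \<le> t" by (rule Bmem(1)[OF pB])
          show "s (c t p) (snd p) \<in> Q (fst p)" by (rule M.subspace_scale[OF sub Bmem(2)[OF pB]])
        qed
      qed
    qed
    have Gx: "Gs u = - x u" for u
    proof -
      have p2: "(\<Sum>p\<in>I t. (if u = t then q (fst p) t (s (c t p) (snd p)) else 0)) = (if u = t then x t else 0)"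
        if tT: "t \<in> T" for t
      proof (cases "u = t")
        case True
        have "(\<Sum>p\<in>I t. q (fst p) t (s (c t p) (snd p))) = (\<Sum>p\<in>I t. s (c t p) (\<beta> t p))"
        proof (rule sum.cong)
          fix p assume "p \<in> I t"
          then have pB: "p \<in> B t" using IB[OF tT] by blast
          show "q (fst p) t (s (c t p) (snd p)) = s (c t p) (\<beta> t p)"
            unfolding \<beta>_def by (rule scl[OF Bmem[OF pB]])
        qed simp
        then show ?thesis using True xs[OF tT] by simp
      qed simp
      have p1: "(\<Sum>t\<in>T. \<Sum>p\<in>I t. (if u = fst p then s (c t p) (snd p) else 0)) = 0"
      proof -
        have "(\<Sum>t\<in>T. \<Sum>p\<in>I t. (if u = fst p then s (c t p) (snd p) else 0))
            = (\<Sum>p\<in>IU. \<Sum>t\<in>{t \<in> T. p \<in> I t}. (if u = fst p then s (c t p) (snd p) else 0))"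
          by (rule swap)
        also have "\<dots> = (\<Sum>p\<in>IU. (if u = fst p then s (C p) (snd p) else 0))"
          unfolding C_def by (rule sum.cong) (simp_all add: M.scale_sum_left)
        also have "\<dots> = (\<Sum>p\<in>IU. (0::'q))" by (rule sum.cong) (simp_all add: C0)
        also have "\<dots> = 0" by simp
        finally show ?thesis .
      qed
      have "Gs u = (\<Sum>t\<in>T. \<Sum>p\<in>I t. (if u = fst p then s (c t p) (snd p) else 0))
          - (\<Sum>t\<in>T. \<Sum>p\<in>I t. (if u = t then q (fst p) t (s (c t p) (snd p)) else 0))"
        unfolding Gs_def \<gamma>_def by (simp add: sum_subtractf)
      also have "(\<Sum>t\<in>T. \<Sum>p\<in>I t. (if u = t then q (fst p) t (s (c t p) (snd p)) else 0))
          = (\<Sum>t\<in>T. (if u = t then x t else 0))" by (rule sum.cong) (simp_all add: p2)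
      also have "\<dots> = x u" using fT by (simp add: sum.delta T_def)
      finally show ?thesis using p1 by simp
    qed
    have "(\<lambda>u. - Gs u) \<in> colim_rel Q q {j. j < i}" by (rule G.rel_neg[OF Grel])
    moreover have "(\<lambda>u. - Gs u) = x" using Gx by (simp add: fun_eq_iff)
    ultimately show "x \<in> colim_rel Q q {j. j < i}" by simp
  qed
qed

lemma nat_trans_parts:
  assumes "nat_trans s1 s2 A a B b eta"
  shows "\<And>i x. x \<in> A i \<Longrightarrow> eta i x \<in> B i"
    and "\<And>i x y. x \<in> A i \<Longrightarrow> y \<in> A i \<Longrightarrow> eta i (x + y) = eta i x + eta i y"
    and "\<And>i j x. i \<le> j \<Longrightarrow> x \<in> A i \<Longrightarrow> eta j (a i j x) = b i j (eta i x)"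
proof -
  have c1: "\<forall>i. lin_on s1 s2 (A i) (eta i) \<and> eta i ` A i \<subseteq> B i" using assms unfolding nat_trans_def by (rule conjunct1)
  have c2: "\<forall>i j. i \<le> j \<longrightarrow> (\<forall>x\<in>A i. eta j (a i j x) = b i j (eta i x))" using assms unfolding nat_trans_def by (rule conjunct2)
  show "eta i x \<in> B i" if "x \<in> A i" for i x
  proof -
    have "eta i ` A i \<subseteq> B i" using c1 by blast
    then show ?thesis using that by blast
  qed
  show "eta i (x + y) = eta i x + eta i y" if "x \<in> A i" "y \<in> A i" for i x y
  proof -
    have "lin_on s1 s2 (A i) (eta i)" using c1 by blast
    then have "\<forall>x\<in>A i. \<forall>y\<in>A i. eta i (x + y) = eta i x + eta i y" unfolding lin_on_def by (rule conjunct1)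
    then show ?thesis using that by blast
  qed
  show "eta j (a i j x) = b i j (eta i x)" if "i \<le> j" "x \<in> A i" for i j x
    using c2 that by blast
qed

lemma resolution_acyclic:
  fixes d :: "'p::order \<Rightarrow> nat" and S :: "'p \<Rightarrow> 'm::ab_group_add set" and f :: "'p \<Rightarrow> 'p \<Rightarrow> 'm \<Rightarrow> 'm"
    and s :: "'r::comm_ring_1 \<Rightarrow> 'm \<Rightarrow> 'm" and s' :: "'r \<Rightarrow> 'q::ab_group_add \<Rightarrow> 'q"
    and Q :: "nat \<Rightarrow> 'p \<Rightarrow> 'q set" and q :: "nat \<Rightarrow> 'p \<Rightarrow> 'p \<Rightarrow> 'q \<Rightarrow> 'q"
    and dQ :: "nat \<Rightarrow> 'p \<Rightarrow> 'q \<Rightarrow> 'q" and eps :: "'p \<Rightarrow> 'q \<Rightarrow> 'm"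
  assumes filt: "filtration d" and gS: "gfun S f" and latS: "\<forall>i. latching_mono S f i"
    and fr: "free_resolution s s' S f Q q dQ eps"
  shows "\<forall>n>0. colim_H_zero s' Q q dQ n"
proof -
  note FR = fr[unfolded free_resolution_def]
  have fQ: "free_pmod s' (Q k) (q k)" for k using FR[THEN conjunct1] by (rule spec)
  have nt: "nat_trans s' s' (Q (Suc k)) (q (Suc k)) (Q k) (q k) (dQ k)" for k
    using FR[THEN conjunct2, THEN conjunct1] by (rule spec)
  have ne: "nat_trans s' s (Q 0) (q 0) S f eps" using FR[THEN conjunct2, THEN conjunct2, THEN conjunct1] .
  have es: "eps i ` Q 0 i = S i" for i
    using FR[THEN conjunct2, THEN conjunct2, THEN conjunct2, THEN conjunct1] by (rule spec)
  have ex0: "{x \<in> Q 0 i. eps i x = 0} = dQ 0 i ` Q 1 i" for i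
    using FR[THEN conjunct2, THEN conjunct2, THEN conjunct2, THEN conjunct2, THEN conjunct1] by (rule spec)
  have exS: "{x \<in> Q (Suc k) i. dQ k i x = 0} = dQ (Suc k) i ` Q (Suc (Suc k)) i" for k i
    using FR[THEN conjunct2, THEN conjunct2, THEN conjunct2, THEN conjunct2, THEN conjunct2] by blast
  have gQ: "gfun (Q k) (q k)" for k using pmod_gfun fQ[of k] unfolding free_pmod_def by blast
  have latQ: "\<forall>i. latching_mono (Q k) (q k) i" for k using free_latching[OF fQ] by blast
  define Kn where "Kn m i = (case m of 0 \<Rightarrow> {x \<in> Q 0 i. eps i x = 0} | Suc m' \<Rightarrow> {x \<in> Q (Suc m') i. dQ m' i x = 0})"
    for m i
  have img: "dQ m i ` Q (Suc m) i = Kn m i" for m i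
  proof (cases m)
    case 0 then show ?thesis unfolding Kn_def using ex0[of i] by simp
  next
    case (Suc m') then show ?thesis unfolding Kn_def using exS[of m' i] by simp
  qed
  have sext0: "sext (Q 0) (q 0) S f eps"
  proof (intro sext.intro sext_axioms.intro)
    show "gfun (Q 0) (q 0)" by (rule gQ)
    show "gfun S f" by (rule gS)
    show "eps i x \<in> S i" if "x \<in> Q 0 i" for x i by (rule nat_trans_parts(1)[OF ne that])
    show "eps i (x + y) = eps i x + eps i y" if "x \<in> Q 0 i" "y \<in> Q 0 i" for x y i
      by (rule nat_trans_parts(2)[OF ne that])
    show "eps j (q 0 i j x) = f i j (eps i x)" if "i \<le> j" "x \<in> Q 0 i" for i j x
      by (rule nat_trans_parts(3)[OF ne that])
    show "\<exists>x\<in>Q 0 i. eps i x = c" if "c \<in> S i" for c i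
    proof -
      have "c \<in> eps i ` Q 0 i" using that es[of i] by simp
      then obtain x where "x \<in> Q 0 i" "c = eps i x" by (rule imageE)
      then show ?thesis by auto
    qed
  qed
  have sextS: "sext (Q (Suc m)) (q (Suc m)) (Kn m) (q m) (dQ m)" if gK: "gfun (Kn m) (q m)" for m
  proof (intro sext.intro sext_axioms.intro)
    show "gfun (Q (Suc m)) (q (Suc m))" by (rule gQ)
    show "gfun (Kn m) (q m)" by (rule gK)
    show "dQ m i x \<in> Kn m i" if "x \<in> Q (Suc m) i" for x i using img[of m i] that by blast
    show "dQ m i (x + y) = dQ m i x + dQ m i y" if "x \<in> Q (Suc m) i" "y \<in> Q (Suc m) i" for x y i
      by (rule nat_trans_parts(2)[OF nt that])
    show "dQ m j (q (Suc m) i j x) = q m i j (dQ m i x)" if "i \<le> j" "x \<in> Q (Suc m) i" for i j x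
      by (rule nat_trans_parts(3)[OF nt that])
    show "\<exists>x\<in>Q (Suc m) i. dQ m i x = c" if "c \<in> Kn m i" for c i
    proof -
      have "c \<in> dQ m i ` Q (Suc m) i" using that img[of m i] by simp
      then obtain x where "x \<in> Q (Suc m) i" "c = dQ m i x" by (rule imageE)
      then show ?thesis by auto
    qed
  qed
  have GK: "gfun (Kn m) (q m) \<and> (\<forall>i. latching_mono (Kn m) (q m) i)" for m
  proof (induction m)
    case 0
    interpret X: sext "Q 0" "q 0" S f eps by (rule sext0)
    have kk: "X.ker = Kn 0" unfolding X.ker_def Kn_def by (simp add: fun_eq_iff)
    show ?case using X.ker_gfun X.ker_latching[OF filt latQ latS] unfolding kk by blast
  next
    case (Suc m)
    interpret X: sext "Q (Suc m)" "q (Suc m)" "Kn m" "q m" "dQ m" by (rule sextS) (use Suc in blast)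
    have kk: "X.ker = Kn (Suc m)" unfolding X.ker_def Kn_def by (simp add: fun_eq_iff)
    have lK: "\<forall>l. latching_mono (Kn m) (q m) l" using Suc by blast
    show ?case using X.ker_gfun X.ker_latching[OF filt latQ lK] unfolding kk by blast
  qed
  have relKn: "w \<in> colim_rel (Kn m) (q m) UNIV"
    if w: "w \<in> colim_rel (Q m) (q m) UNIV" and wk: "\<forall>t. w t \<in> Kn m t" for w m
  proof (cases m)
    case 0
    interpret X: sext "Q 0" "q 0" S f eps by (rule sext0)
    have kk: "X.ker = Kn 0" unfolding X.ker_def Kn_def by (simp add: fun_eq_iff)
    have "w \<in> colim_rel X.ker (q 0) UNIV"
      by (rule X.relK[OF filt]) (use latS w wk kk 0 in auto)
    then show ?thesis using kk 0 by simp
  next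
    case (Suc m')
    interpret X: sext "Q (Suc m')" "q (Suc m')" "Kn m'" "q m'" "dQ m'" by (rule sextS) (use GK in blast)
    have kk: "X.ker = Kn (Suc m')" unfolding X.ker_def Kn_def by (simp add: fun_eq_iff)
    have lK: "\<forall>l. latching_mono (Kn m') (q m') l" using GK by blast
    have "w \<in> colim_rel X.ker (q (Suc m')) UNIV"
      by (rule X.relK[OF filt]) (use lK w wk kk Suc in auto)
    then show ?thesis using kk Suc by simp
  qed
  show ?thesis
  proof (intro allI impI)
    fix n :: nat assume "n > 0"
    then obtain m where nm: "n = Suc m" by (cases n) auto
    interpret X: sext "Q (Suc m)" "q (Suc m)" "Kn m" "q m" "dQ m" by (rule sextS) (use GK in blast)
    interpret Y: sext "Q (Suc (Suc m))" "q (Suc (Suc m))" "Kn (Suc m)" "q (Suc m)" "dQ (Suc m)"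
      by (rule sextS) (use GK in blast)
    show "colim_H_zero s' Q q dQ n"
      unfolding colim_H_zero_def nm diff_Suc_1
    proof (intro ballI impI)
      fix x assume xd: "x \<in> dsum (Q (Suc m)) UNIV"
        and wr: "(\<lambda>i. dQ m i (x i)) \<in> colim_rel (Q m) (q m) UNIV"
      have xQ: "x t \<in> Q (Suc m) t" for t using xd unfolding dsum_def by blast
      have fx: "finite {t. x t \<noteq> 0}" using xd unfolding dsum_def by blast
      define w where "w = (\<lambda>i. dQ m i (x i))"
      have wk: "\<forall>t. w t \<in> Kn m t" unfolding w_def using X.pi_in xQ by blast
      have "w \<in> colim_rel (Kn m) (q m) UNIV" using relKn[OF wr[folded w_def] wk] .
      then obtain gs where vg: "valid (Kn m) gs UNIV" and wg: "w = genval (q m) gs"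
        using X.F.rel_genval by blast
      obtain gs' where vg': "valid (Q (Suc m)) gs' UNIV" and mg: "map (pgen (dQ m)) gs' = gs"
        using X.lift_gens[OF vg] by blast
      have pg: "dQ m t (genval (q (Suc m)) gs' t) = w t" for t
        using X.genval_pgen[OF vg', of t] mg wg by simp
      define v where "v t = x t - genval (q (Suc m)) gs' t" for t
      have vQ: "v t \<in> Q (Suc m) t" for t unfolding v_def by (rule X.Q.diff_in[OF xQ X.Q.genval_in[OF vg']])
      have v0: "dQ m t (v t) = 0" for t
        unfolding v_def using X.pi_diff[OF xQ X.Q.genval_in[OF vg']] pg[of t] unfolding w_def by simp
      have vim: "\<exists>b\<in>Q (Suc (Suc m)) t. dQ (Suc m) t b = v t" for t
      proof -
        have "v t \<in> {x \<in> Q (Suc m) t. dQ m t x = 0}" using vQ v0 by simp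
        then have "v t \<in> dQ (Suc m) t ` Q (Suc (Suc m)) t" unfolding exS .
        then obtain b where "b \<in> Q (Suc (Suc m)) t" "v t = dQ (Suc m) t b" by (rule imageE)
        then show ?thesis by auto
      qed
      define y where "y t = (if v t = 0 then 0 else (SOME b. b \<in> Q (Suc (Suc m)) t \<and> dQ (Suc m) t b = v t))" for t
      have yp: "y t \<in> Q (Suc (Suc m)) t \<and> dQ (Suc m) t (y t) = v t" for t
      proof (cases "v t = 0")
        case True then show ?thesis unfolding y_def using Y.Q.zero_in Y.pi_zero by simp
      next
        case False
        have "\<exists>b. b \<in> Q (Suc (Suc m)) t \<and> dQ (Suc m) t b = v t" using vim by blast
        then have "(SOME b. b \<in> Q (Suc (Suc m)) t \<and> dQ (Suc m) t b = v t) \<in> Q (Suc (Suc m)) t \<and>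
          dQ (Suc m) t (SOME b. b \<in> Q (Suc (Suc m)) t \<and> dQ (Suc m) t b = v t) = v t" by (rule someI_ex)
        then show ?thesis unfolding y_def using False by simp
      qed
      have sy: "{t. y t \<noteq> 0} \<subseteq> {t. x t \<noteq> 0} \<union> idx gs'"
      proof
        fix t assume "t \<in> {t. y t \<noteq> 0}"
        then have "v t \<noteq> 0" unfolding y_def by auto
        then have "x t \<noteq> 0 \<or> genval (q (Suc m)) gs' t \<noteq> 0" unfolding v_def by auto
        then show "t \<in> {t. x t \<noteq> 0} \<union> idx gs'" using genval_out[of t gs' "q (Suc m)"] by auto
      qed
      have yd: "y \<in> dsum (Q (Suc (Suc m))) UNIV"
        unfolding dsum_def using finite_subset[OF sy] fx yp by auto
      have "(\<lambda>i. x i - dQ (Suc m) i (y i)) = genval (q (Suc m)) gs'"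
      proof
        fix t show "x t - dQ (Suc m) t (y t) = genval (q (Suc m)) gs' t"
          using yp[of t] unfolding v_def by simp
      qed
      then have "(\<lambda>i. x i - dQ (Suc m) i (y i)) \<in> colim_rel (Q (Suc m)) (q (Suc m)) UNIV"
        using X.Q.genval_rel[OF vg'] by simp
      then show "\<exists>y\<in>dsum (Q (Suc (Suc m))) UNIV. (\<lambda>i. x i - dQ (Suc m) i (y i)) \<in> colim_rel (Q (Suc m)) (q (Suc m)) UNIV"
        using yd by blast
    qed
  qed
qed

theorem theoremB:
  fixes s :: "'r::comm_ring_1 \<Rightarrow> 'm::ab_group_add \<Rightarrow> 'm"
    and S :: "'p::order \<Rightarrow> 'm set"
    and f :: "'p \<Rightarrow> 'p \<Rightarrow> 'm \<Rightarrow> 'm"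
    and d :: "'p \<Rightarrow> nat"
  assumes "filtration d"
    and "pmod s S f"
  shows "(reedy_cofibrant (deg0 S) (deg0_map f) \<longleftrightarrow> pseudo_projective S f) \<and>
         (pseudo_projective S f \<longrightarrow>
            (\<forall>(s' :: 'r \<Rightarrow> 'q::ab_group_add \<Rightarrow> 'q) Q q dQ eps.
               free_resolution s s' S f Q q dQ eps \<longrightarrow> (\<forall>n>0. colim_H_zero s' Q q dQ n)))"
proof -
  have gS: "gfun S f" by (rule pmod_gfun[OF assms(2)])
  have eqv: "(\<forall>i. latching_mono S f i) \<longleftrightarrow> pseudo_projective S f"
    by (rule gfun.latching_iff_pp[OF gS assms(1)])
  have p1: "reedy_cofibrant (deg0 S) (deg0_map f) \<longleftrightarrow> pseudo_projective S f"
    using reedy_iff[of S f] eqv by simp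
  have p2: "pseudo_projective S f \<longrightarrow>
            (\<forall>(s' :: 'r \<Rightarrow> 'q::ab_group_add \<Rightarrow> 'q) Q q dQ eps.
               free_resolution s s' S f Q q dQ eps \<longrightarrow> (\<forall>n>0. colim_H_zero s' Q q dQ n))"
  proof (rule impI, intro allI, rule impI)
    fix s' :: "'r \<Rightarrow> 'q::ab_group_add \<Rightarrow> 'q" and Q q dQ eps
    assume pp: "pseudo_projective S f" and fr: "free_resolution s s' S f Q q dQ eps"
    have latS: "\<forall>i. latching_mono S f i" using eqv pp by simp
    show "\<forall>n>0. colim_H_zero s' Q q dQ n" by (rule resolution_acyclic[OF assms(1) gS latS fr])
  qed
  show ?thesis using p1 p2 by blast
qed

end
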